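(* Consider the reachability strategy-improvement algorithm described in the context, run on a concurrent game structure $G$ with target $T$ (with all states of $T\cup W_2$ absorbing), producing player-1 selectors $\gamma_0,\gamma_1,\gamma_2,\dots$ and valuations $v_i=\mathrm{val}_1^{\overline{\gamma}_i}(\mathrm{Reach}(T))$ (if the algorithm stops, the sequences are understood as constant from that point on). Then: (1) for all $i\ge 0$, $\overline{\gamma}_i\preceq\overline{\gamma}_{i+1}$; moreover, if $\overline{\gamma}_i=\overline{\gamma}_{i+1}$ then $\overline{\gamma}_i$ is an optimal strategy for $\mathrm{Reach}(T)$, i.e. $\mathrm{val}_1^{\overline{\gamma}_i}(\mathrm{Reach}(T))=\mathrm{val}_1(\mathrm{Reach}(T))$; (2) $\lim_{i\to\infty}v_i=\mathrm{val}_1(\mathrm{Reach}(T))$ pointwise.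
   Context: A concurrent game structure $G=(S,M,\Gamma_1,\Gamma_2,\delta)$: finite states $S$, finite moves $M$, nonempty move sets $\Gamma_1(s),\Gamma_2(s)\subseteq M$, and $\delta(s,a_1,a_2)\in\mathrm{Distr}(S)$ for $a_1\in\Gamma_1(s),a_2\in\Gamma_2(s)$ (moves chosen simultaneously and independently). A state $s$ is absorbing if $\delta(s,a_1,a_2)(s)=1$ for all moves. A selector for player $i$ assigns to each state $s$ a distribution $\xi(s)$ on $\Gamma_i(s)$; $\overline{\xi}$ is the memoryless strategy playing $\xi$ forever. Strategies are maps from finite histories to distributions on available moves; $\Pr_s^{\pi_1,\pi_2}$ is the induced measure on plays from $s$. $\mathrm{Reach}(T)$ is the set of plays visiting $T$. $\mathrm{val}_1^{\pi_1}(\mathrm{Reach}(T))(s)=\inf_{\pi_2}\Pr_s^{\pi_1,\pi_2}(\mathrm{Reach}(T))$ and $\mathrm{val}_1(\mathrm{Reach}(T))=\sup_{\pi_1}\mathrm{val}_1^{\pi_1}(\mathrm{Reach}(T))$; $\pi_1$ is optimal if $\mathrm{val}_1^{\pi_1}=\mathrm{val}_1$ at all states. A valuation is a map $v:S\to[0,1]$, compared pointwise. For selectors $\xi_1,\xi_2$: $\mathrm{Pre}_{\xi_1,\xi_2}(v)(s)=\sum_{a,b}\sum_{t}v(t)\,\delta(s,a,b)(t)\,\xi_1(s)(a)\,\xi_2(s)(b)$, $\mathrm{Pre}_{1:\xi_1}(v)(s)=\inf_{\xi_2}\mathrm{Pre}_{\xi_1,\xi_2}(v)(s)$, $\mathrm{Pre}_1(v)(s)=\sup_{\xi_1}\mathrm{Pre}_{1:\xi_1}(v)(s)$.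 $W_2=\{s:\mathrm{val}_1(\mathrm{Reach}(T))(s)=0\}$; standing assumption: all states in $T\cup W_2$ are absorbing. $\xi^{\mathrm{unif}}$ is the player-1 selector choosing all moves of $\Gamma_1(s)$ uniformly at random at each state. Preorder on player-1 strategies: $\pi_1\prec\pi_1'$ iff $\mathrm{val}_1^{\pi_1}(\mathrm{Reach}(T))\le\mathrm{val}_1^{\pi_1'}(\mathrm{Reach}(T))$ pointwise with strict inequality at some state; $\pi_1\preceq\pi_1'$ iff $\pi_1\prec\pi_1'$ or $\pi_1=\pi_1'$. The algorithm: $\gamma_0=\xi^{\mathrm{unif}}$, $v_0=\mathrm{val}_1^{\overline{\gamma}_0}(\mathrm{Reach}(T))$. At iteration $i$: let $I=\{s\in S\setminus(T\cup W_2):\mathrm{Pre}_1(v_i)(s)>v_i(s)\}$; let $\xi_1$ be a player-1 selector with $\mathrm{Pre}_{1:\xi_1}(v_i)(s)=\mathrm{Pre}_1(v_i)(s)$ for all $s\in I$; set $\gamma_{i+1}(s)=\gamma_i(s)$ for $s\notin I$ and $\gamma_{i+1}(s)=\xi_1(s)$ for $s\in I$; compute $v_{i+1}=\mathrm{val}_1^{\overline{\gamma}_{i+1}}(\mathrm{Reach}(T))$. The algorithm stops and returns $\overline{\gamma}_i$ when $I=\emptyset$. *)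

theory Defs
  imports "HOL-Probability.Probability"
begin

text \<open>Histories are nonempty lists of states (last element = current state).\<close>

type_synonym ('s,'m) strategy = "'s list \<Rightarrow> 'm pmf"
type_synonym ('s,'m) selector = "'s \<Rightarrow> 'm pmf"

definition strategies :: "('s \<Rightarrow> 'm set) \<Rightarrow> ('s,'m) strategy set" where
  "strategies G = {\<pi>. \<forall>h. h \<noteq> [] \<longrightarrow> set_pmf (\<pi> h) \<subseteq> G (last h)}"

definition selectors :: "('s \<Rightarrow> 'm set) \<Rightarrow> ('s,'m) selector set" where
  "selectors G = {\<xi>. \<forall>s. set_pmf (\<xi> s) \<subseteq> G s}"

definition memoryless :: "('s,'m) selector \<Rightarrow> ('s,'m) strategy" where
  "memoryless \<xi> = (\<lambda>h. \<xi> (last h))"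

definition unif_selector :: "('s \<Rightarrow> 'm set) \<Rightarrow> ('s,'m) selector" where
  "unif_selector G = (\<lambda>s. pmf_of_set (G s))"

definition absorbing :: "('s \<Rightarrow> 'm set) \<Rightarrow> ('s \<Rightarrow> 'm set) \<Rightarrow> ('s \<Rightarrow> 'm \<Rightarrow> 'm \<Rightarrow> 's pmf) \<Rightarrow> 's \<Rightarrow> bool" where
  "absorbing G1 G2 \<delta> s \<longleftrightarrow> (\<forall>a\<in>G1 s. \<forall>b\<in>G2 s. pmf (\<delta> s a b) s = 1)"

text \<open>Distribution of the play prefix of length n+1 (histories) from s under the
  strategy pair (moves chosen simultaneously and independently).\<close>
fun hist :: "('s \<Rightarrow> 'm \<Rightarrow> 'm \<Rightarrow> 's pmf) \<Rightarrow> 's \<Rightarrow> ('s,'m) strategy \<Rightarrow> ('s,'m) strategy \<Rightarrow> nat \<Rightarrow> 's list pmf" where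
  "hist \<delta> s \<pi>1 \<pi>2 0 = return_pmf [s]"
| "hist \<delta> s \<pi>1 \<pi>2 (Suc n) =
     hist \<delta> s \<pi>1 \<pi>2 n \<bind> (\<lambda>h. \<pi>1 h \<bind> (\<lambda>a. \<pi>2 h \<bind> (\<lambda>b.
        map_pmf (\<lambda>t. h @ [t]) (\<delta> (last h) a b))))"

text \<open>Pr_s^{pi1,pi2}(Reach T): the measure of the increasing union of the cylinder events
  "T visited within the first n steps", i.e. the supremum of their probabilities.\<close>
definition reach_prob :: "('s \<Rightarrow> 'm \<Rightarrow> 'm \<Rightarrow> 's pmf) \<Rightarrow> 's set \<Rightarrow> ('s,'m) strategy \<Rightarrow> ('s,'m) strategy \<Rightarrow> 's \<Rightarrow> real" where
  "reach_prob \<delta> T \<pi>1 \<pi>2 s = (SUP n. measure_pmf.prob (hist \<delta> s \<pi>1 \<pi>2 n) {h. set h \<inter> T \<noteq> {}})"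

definition val1_strat :: "('s \<Rightarrow> 'm set) \<Rightarrow> ('s \<Rightarrow> 'm \<Rightarrow> 'm \<Rightarrow> 's pmf) \<Rightarrow> 's set \<Rightarrow> ('s,'m) strategy \<Rightarrow> 's \<Rightarrow> real" where
  "val1_strat G2 \<delta> T \<pi>1 s = (INF \<pi>2\<in>strategies G2. reach_prob \<delta> T \<pi>1 \<pi>2 s)"

definition val1 :: "('s \<Rightarrow> 'm set) \<Rightarrow> ('s \<Rightarrow> 'm set) \<Rightarrow> ('s \<Rightarrow> 'm \<Rightarrow> 'm \<Rightarrow> 's pmf) \<Rightarrow> 's set \<Rightarrow> 's \<Rightarrow> real" where
  "val1 G1 G2 \<delta> T s = (SUP \<pi>1\<in>strategies G1. val1_strat G2 \<delta> T \<pi>1 s)"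

definition W2 :: "('s \<Rightarrow> 'm set) \<Rightarrow> ('s \<Rightarrow> 'm set) \<Rightarrow> ('s \<Rightarrow> 'm \<Rightarrow> 'm \<Rightarrow> 's pmf) \<Rightarrow> 's set \<Rightarrow> 's set" where
  "W2 G1 G2 \<delta> T = {s. val1 G1 G2 \<delta> T s = 0}"

definition Pre_sel :: "('s::finite \<Rightarrow> 'm::finite set) \<Rightarrow> ('s \<Rightarrow> 'm set) \<Rightarrow> ('s \<Rightarrow> 'm \<Rightarrow> 'm \<Rightarrow> 's pmf)
    \<Rightarrow> ('s,'m) selector \<Rightarrow> ('s,'m) selector \<Rightarrow> ('s \<Rightarrow> real) \<Rightarrow> 's \<Rightarrow> real" where
  "Pre_sel G1 G2 \<delta> \<xi>1 \<xi>2 v s =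
     (\<Sum>a\<in>G1 s. \<Sum>b\<in>G2 s. \<Sum>t\<in>UNIV. v t * pmf (\<delta> s a b) t * pmf (\<xi>1 s) a * pmf (\<xi>2 s) b)"

definition Pre1_sel :: "('s::finite \<Rightarrow> 'm::finite set) \<Rightarrow> ('s \<Rightarrow> 'm set) \<Rightarrow> ('s \<Rightarrow> 'm \<Rightarrow> 'm \<Rightarrow> 's pmf)
    \<Rightarrow> ('s,'m) selector \<Rightarrow> ('s \<Rightarrow> real) \<Rightarrow> 's \<Rightarrow> real" where
  "Pre1_sel G1 G2 \<delta> \<xi>1 v s = (INF \<xi>2\<in>selectors G2. Pre_sel G1 G2 \<delta> \<xi>1 \<xi>2 v s)"

definition Pre1 :: "('s::finite \<Rightarrow> 'm::finite set) \<Rightarrow> ('s \<Rightarrow> 'm set) \<Rightarrow> ('s \<Rightarrow> 'm \<Rightarrow> 'm \<Rightarrow> 's pmf)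
    \<Rightarrow> ('s \<Rightarrow> real) \<Rightarrow> 's \<Rightarrow> real" where
  "Pre1 G1 G2 \<delta> v s = (SUP \<xi>1\<in>selectors G1. Pre1_sel G1 G2 \<delta> \<xi>1 v s)"

definition strat_less :: "('s \<Rightarrow> 'm set) \<Rightarrow> ('s \<Rightarrow> 'm \<Rightarrow> 'm \<Rightarrow> 's pmf) \<Rightarrow> 's set
    \<Rightarrow> ('s,'m) strategy \<Rightarrow> ('s,'m) strategy \<Rightarrow> bool" where
  "strat_less G2 \<delta> T \<pi> \<pi>' \<longleftrightarrow>
     (\<forall>s. val1_strat G2 \<delta> T \<pi> s \<le> val1_strat G2 \<delta> T \<pi>' s) \<and>
     (\<exists>s. val1_strat G2 \<delta> T \<pi> s < val1_strat G2 \<delta> T \<pi>' s)"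

definition strat_le :: "('s \<Rightarrow> 'm set) \<Rightarrow> ('s \<Rightarrow> 'm \<Rightarrow> 'm \<Rightarrow> 's pmf) \<Rightarrow> 's set
    \<Rightarrow> ('s,'m) strategy \<Rightarrow> ('s,'m) strategy \<Rightarrow> bool" where
  "strat_le G2 \<delta> T \<pi> \<pi>' \<longleftrightarrow> strat_less G2 \<delta> T \<pi> \<pi>' \<or> \<pi> = \<pi>'"

text \<open>A run of the strategy-improvement algorithm: gamma 0 is uniform, and each step
  performs the improvement (when I is empty the step leaves gamma unchanged, so a
  stopped run is constant from then on).\<close>
definition improve_step :: "('s::finite \<Rightarrow> 'm::finite set) \<Rightarrow> ('s \<Rightarrow> 'm set) \<Rightarrow> ('s \<Rightarrow> 'm \<Rightarrow> 'm \<Rightarrow> 's pmf) \<Rightarrow> 's set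
    \<Rightarrow> ('s,'m) selector \<Rightarrow> ('s,'m) selector \<Rightarrow> bool" where
  "improve_step G1 G2 \<delta> T \<gamma> \<gamma>' \<longleftrightarrow>
     (let v = val1_strat G2 \<delta> T (memoryless \<gamma>);
          I = {s. s \<notin> T \<union> W2 G1 G2 \<delta> T \<and> Pre1 G1 G2 \<delta> v s > v s}
      in \<exists>\<xi>1\<in>selectors G1. (\<forall>s\<in>I. Pre1_sel G1 G2 \<delta> \<xi>1 v s = Pre1 G1 G2 \<delta> v s) \<and>
           \<gamma>' = (\<lambda>s. if s \<in> I then \<xi>1 s else \<gamma> s))"

definition algo_run :: "('s::finite \<Rightarrow> 'm::finite set) \<Rightarrow> ('s \<Rightarrow> 'm set) \<Rightarrow> ('s \<Rightarrow> 'm \<Rightarrow> 'm \<Rightarrow> 's pmf) \<Rightarrow> 's set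
    \<Rightarrow> (nat \<Rightarrow> ('s,'m) selector) \<Rightarrow> bool" where
  "algo_run G1 G2 \<delta> T \<gamma> \<longleftrightarrow>
     \<gamma> 0 = unif_selector G1 \<and> (\<forall>i. improve_step G1 G2 \<delta> T (\<gamma> i) (\<gamma> (Suc i)))"

end

theory Submission
  imports Defs
begin

definition hshift :: "'s \<Rightarrow> ('s,'m) strategy \<Rightarrow> ('s,'m) strategy" where
  "hshift s \<pi> = (\<lambda>h. \<pi> (s # h))"

lemma measure_bind_pmf_finite:
  fixes M :: "'a::finite pmf"
  shows "measure_pmf.prob (bind_pmf M N) X = (\<Sum>x\<in>UNIV. pmf M x * measure_pmf.prob (N x) X)"
proof -
  have "emeasure (measure_pmf (bind_pmf M N)) X = (\<integral>\<^sup>+x. emeasure (N x) X \<partial>M)" by simp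
  also have "\<dots> = (\<Sum>x\<in>UNIV. emeasure (N x) X * pmf M x)"
    by (rule nn_integral_measure_pmf_support) auto
  also have "\<dots> = ennreal (\<Sum>x\<in>UNIV. pmf M x * measure_pmf.prob (N x) X)"
    by (simp add: measure_pmf.emeasure_eq_measure sum_ennreal[symmetric] ennreal_mult' mult.commute)
  finally show ?thesis
    by (simp add: measure_pmf.emeasure_eq_measure sum_nonneg)
qed

lemma hist_support: "h \<in> set_pmf (hist \<delta> s \<pi>1 \<pi>2 n) \<Longrightarrow> h \<noteq> [] \<and> hd h = s"
proof (induction n arbitrary: h)
  case 0 then show ?case by simp
next
  case (Suc n)
  then show ?case by (auto simp: set_bind_pmf)
qed

lemma hist_cong:
  assumes "\<And>h. h \<noteq> [] \<Longrightarrow> hd h = s \<Longrightarrow> \<pi>1 h = \<pi>1' h"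
    and "\<And>h. h \<noteq> [] \<Longrightarrow> hd h = s \<Longrightarrow> \<pi>2 h = \<pi>2' h"
  shows "hist \<delta> s \<pi>1 \<pi>2 n = hist \<delta> s \<pi>1' \<pi>2' n"
proof (induction n)
  case 0 then show ?case by simp
next
  case (Suc n)
  show ?case
    apply (simp add: Suc)
    apply (rule bind_pmf_cong, simp)
    using hist_support[of _ \<delta> s \<pi>1' \<pi>2' n] assms by auto
qed

lemma hist_Suc_hshift:
  "hist \<delta> s \<pi>1 \<pi>2 (Suc n) = \<pi>1 [s] \<bind> (\<lambda>a. \<pi>2 [s] \<bind> (\<lambda>b. \<delta> s a b \<bind>
      (\<lambda>t. map_pmf ((#) s) (hist \<delta> t (hshift s \<pi>1) (hshift s \<pi>2) n))))"
proof (induction n)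
  case 0
  then show ?case by (simp add: bind_return_pmf map_pmf_def)
next
  case (Suc n)
  define K where "K = (\<lambda>h. \<pi>1 h \<bind> (\<lambda>a. \<pi>2 h \<bind> (\<lambda>b.
        map_pmf (\<lambda>t. h @ [t]) (\<delta> (last h) a b))))"
  have K: "hist \<delta> s \<pi>1 \<pi>2 (Suc (Suc n)) = hist \<delta> s \<pi>1 \<pi>2 (Suc n) \<bind> K"
    by (simp add: K_def)
  have Kt: "\<And>t. map_pmf ((#) s) (hist \<delta> t (hshift s \<pi>1) (hshift s \<pi>2) (Suc n))
      = hist \<delta> t (hshift s \<pi>1) (hshift s \<pi>2) n \<bind> (\<lambda>h. K (s # h))"
  proof -
    fix t
    show "map_pmf ((#) s) (hist \<delta> t (hshift s \<pi>1) (hshift s \<pi>2) (Suc n))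
      = hist \<delta> t (hshift s \<pi>1) (hshift s \<pi>2) n \<bind> (\<lambda>h. K (s # h))"
      apply (simp add: map_bind_pmf)
      apply (rule bind_pmf_cong, simp)
      using hist_support[of _ \<delta> t "hshift s \<pi>1" "hshift s \<pi>2" n]
      by (auto simp: K_def hshift_def map_bind_pmf pmf.map_comp o_def)
  qed
  show ?case
    unfolding K Suc Kt
    by (simp add: bind_assoc_pmf bind_map_pmf)
qed

lemma prob_hist_Suc:
  fixes \<delta> :: "'s \<Rightarrow> 'm::finite \<Rightarrow> 'm \<Rightarrow> 's::finite pmf"
  shows "measure_pmf.prob (hist \<delta> s \<pi>1 \<pi>2 (Suc n)) A =
   (\<Sum>a\<in>UNIV. \<Sum>b\<in>UNIV. \<Sum>t\<in>UNIV. pmf (\<pi>1 [s]) a * pmf (\<pi>2 [s]) b * pmf (\<delta> s a b) t *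
      measure_pmf.prob (hist \<delta> t (hshift s \<pi>1) (hshift s \<pi>2) n) ((#) s -` A))"
  unfolding hist_Suc_hshift
  by (simp add: measure_bind_pmf_finite sum_distrib_left mult.assoc)

definition wsum :: "'m::finite pmf \<Rightarrow> 'm pmf \<Rightarrow> ('m \<Rightarrow> 'm \<Rightarrow> 's::finite pmf) \<Rightarrow> ('s \<Rightarrow> real) \<Rightarrow> real" where
  "wsum p q d f = (\<Sum>a\<in>UNIV. \<Sum>b\<in>UNIV. \<Sum>t\<in>UNIV. pmf p a * pmf q b * pmf (d a b) t * f t)"

lemma wsum_mono: "(\<And>t. f t \<le> g t) \<Longrightarrow> wsum p q d f \<le> wsum p q d g"
  unfolding wsum_def
  by (intro sum_mono mult_left_mono) auto

lemma wsum_mono_supp: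
  assumes "\<And>a b t. pmf p a > 0 \<Longrightarrow> pmf q b > 0 \<Longrightarrow> pmf (d a b) t > 0 \<Longrightarrow> f t \<le> g t"
  shows "wsum p q d f \<le> wsum p q d g"
  unfolding wsum_def
proof (intro sum_mono)
  fix a b t
  show "pmf p a * pmf q b * pmf (d a b) t * f t \<le> pmf p a * pmf q b * pmf (d a b) t * g t"
  proof (cases "pmf p a > 0 \<and> pmf q b > 0 \<and> pmf (d a b) t > 0")
    case True
    then show ?thesis using assms[of a b t] by (intro mult_left_mono) auto
  next
    case False
    then have "pmf p a = 0 \<or> pmf q b = 0 \<or> pmf (d a b) t = 0"
      using pmf_nonneg[of p a] pmf_nonneg[of q b] pmf_nonneg[of "d a b" t] by linarith
    then show ?thesis by auto
  qed
qed

lemma sum_pmf_UNIV: "(\<Sum>t\<in>(UNIV::'a::finite set). pmf d t) = 1"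
  by (rule sum_pmf_eq_1) auto

lemma wsum_const: "wsum p q d (\<lambda>_. c) = c"
proof -
  have "wsum p q d (\<lambda>_. c) = (\<Sum>a\<in>UNIV. \<Sum>b\<in>UNIV. c * pmf p a * pmf q b * (\<Sum>t\<in>UNIV. pmf (d a b) t))"
    unfolding wsum_def by (simp add: sum_distrib_left mult_ac)
  also have "\<dots> = (\<Sum>a\<in>UNIV. c * pmf p a * (\<Sum>b\<in>UNIV. pmf q b))"
    by (simp add: sum_pmf_UNIV flip: sum_distrib_left)
  also have "\<dots> = c * (\<Sum>a\<in>UNIV. pmf p a)"
    by (simp add: sum_pmf_UNIV flip: sum_distrib_left)
  also have "\<dots> = c" by (simp add: sum_pmf_UNIV)
  finally show ?thesis .
qed

lemma wsum_add: "wsum p q d (\<lambda>t. f t + g t) = wsum p q d f + wsum p q d g"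
  unfolding wsum_def by (simp add: distrib_left sum.distrib)

lemma wsum_diff: "wsum p q d (\<lambda>t. f t - g t) = wsum p q d f - wsum p q d g"
  unfolding wsum_def by (simp add: right_diff_distrib sum_subtractf)

lemma wsum_add_const: "wsum p q d (\<lambda>t. f t + c) = wsum p q d f + c"
  by (simp add: wsum_add wsum_const)

lemma wsum_nonneg: "(\<And>t. 0 \<le> f t) \<Longrightarrow> 0 \<le> wsum p q d f"
  using wsum_mono[of "\<lambda>_. 0" f p q d] by (simp add: wsum_const)

lemma wsum_le_const: "(\<And>t. f t \<le> c) \<Longrightarrow> wsum p q d f \<le> c"
  using wsum_mono[of f "\<lambda>_. c" p q d] by (simp add: wsum_const)

lemma tendsto_wsum: "(\<And>t. (\<lambda>n. f n t) \<longlonglongrightarrow> g t) \<Longrightarrow> (\<lambda>n. wsum p q d (f n)) \<longlonglongrightarrow> wsum p q d g"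
  unfolding wsum_def by (intro tendsto_sum tendsto_mult_left) assumption

lemma Pre_sel_wsum:
  fixes G1 G2 :: "'s::finite \<Rightarrow> 'm::finite set"
  assumes "set_pmf (\<xi>1 s) \<subseteq> G1 s" "set_pmf (\<xi>2 s) \<subseteq> G2 s"
  shows "Pre_sel G1 G2 \<delta> \<xi>1 \<xi>2 v s = wsum (\<xi>1 s) (\<xi>2 s) (\<delta> s) v"
proof -
  have z1: "\<And>i. i \<notin> G1 s \<Longrightarrow> pmf (\<xi>1 s) i = 0" using assms(1) by (auto simp: pmf_eq_0_set_pmf)
  have z2: "\<And>i. i \<notin> G2 s \<Longrightarrow> pmf (\<xi>2 s) i = 0" using assms(2) by (auto simp: pmf_eq_0_set_pmf)
  have "Pre_sel G1 G2 \<delta> \<xi>1 \<xi>2 v s = (\<Sum>a\<in>G1 s. \<Sum>b\<in>G2 s. \<Sum>t\<in>UNIV. pmf (\<xi>1 s) a * pmf (\<xi>2 s) b * pmf (\<delta> s a b) t * v t)"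
    unfolding Pre_sel_def by (simp add: mult_ac)
  also have "\<dots> = (\<Sum>a\<in>UNIV. \<Sum>b\<in>G2 s. \<Sum>t\<in>UNIV. pmf (\<xi>1 s) a * pmf (\<xi>2 s) b * pmf (\<delta> s a b) t * v t)"
    apply (rule sum.mono_neutral_left)
    using z1 by auto
  also have "\<dots> = wsum (\<xi>1 s) (\<xi>2 s) (\<delta> s) v"
    unfolding wsum_def
    apply (rule sum.cong, simp)
    apply (rule sum.mono_neutral_left)
    using z2 by auto
  finally show ?thesis .
qed

lemma Pre_sel_cong:
  "\<xi>1 s = \<xi>1' s \<Longrightarrow> \<xi>2 s = \<xi>2' s \<Longrightarrow> Pre_sel G1 G2 \<delta> \<xi>1 \<xi>2 v s = Pre_sel G1 G2 \<delta> \<xi>1' \<xi>2' v s"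
  unfolding Pre_sel_def by simp

definition hitp where
  "hitp \<delta> T \<pi>1 \<pi>2 s n = measure_pmf.prob (hist \<delta> s \<pi>1 \<pi>2 n) {h. set h \<inter> T \<noteq> {}}"

lemma hitp_0: "hitp \<delta> T \<pi>1 \<pi>2 s 0 = (if s \<in> T then 1 else 0)"
  unfolding hitp_def by auto

lemma hitp_Suc:
  fixes \<delta> :: "'s::finite \<Rightarrow> 'm::finite \<Rightarrow> 'm \<Rightarrow> 's pmf"
  shows "hitp \<delta> T \<pi>1 \<pi>2 s (Suc n) = (if s \<in> T then 1 else
     wsum (\<pi>1 [s]) (\<pi>2 [s]) (\<delta> s) (\<lambda>t. hitp \<delta> T (hshift s \<pi>1) (hshift s \<pi>2) t n))"
proof (cases "s \<in> T")
  case True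
  have "hitp \<delta> T \<pi>1 \<pi>2 s (Suc n) = wsum (\<pi>1 [s]) (\<pi>2 [s]) (\<delta> s) (\<lambda>t. 1)"
    unfolding hitp_def prob_hist_Suc wsum_def
    using True by (auto intro!: sum.cong)
  then show ?thesis using True by (simp add: wsum_const)
next
  case False
  have e: "(#) s -` {h. set h \<inter> T \<noteq> {}} = {h. set h \<inter> T \<noteq> {}}" using False by auto
  show ?thesis
    unfolding hitp_def prob_hist_Suc wsum_def e using False by simp
qed

lemma hitp_bounds: "0 \<le> hitp \<delta> T \<pi>1 \<pi>2 s n" "hitp \<delta> T \<pi>1 \<pi>2 s n \<le> 1"
  unfolding hitp_def by auto

lemma hitp_mono_Suc:
  fixes \<delta> :: "'s::finite \<Rightarrow> 'm::finite \<Rightarrow> 'm \<Rightarrow> 's pmf"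
  shows "hitp \<delta> T \<pi>1 \<pi>2 s n \<le> hitp \<delta> T \<pi>1 \<pi>2 s (Suc n)"
proof (induction n arbitrary: s \<pi>1 \<pi>2)
  case 0
  then show ?case by (simp add: hitp_0 hitp_Suc wsum_nonneg hitp_bounds)
next
  case (Suc n)
  show ?case
    apply (subst (1 2) hitp_Suc)
    using Suc by (auto intro!: wsum_mono)
qed

lemma hitp_incseq:
  fixes \<delta> :: "'s::finite \<Rightarrow> 'm::finite \<Rightarrow> 'm \<Rightarrow> 's pmf"
  shows "incseq (hitp \<delta> T \<pi>1 \<pi>2 s)"
  by (rule incseq_SucI) (rule hitp_mono_Suc)

lemma reach_prob_hitp: "reach_prob \<delta> T \<pi>1 \<pi>2 s = (SUP n. hitp \<delta> T \<pi>1 \<pi>2 s n)"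
  unfolding reach_prob_def hitp_def ..

lemma reach_lim:
  fixes \<delta> :: "'s::finite \<Rightarrow> 'm::finite \<Rightarrow> 'm \<Rightarrow> 's pmf"
  shows "(\<lambda>n. hitp \<delta> T \<pi>1 \<pi>2 s n) \<longlonglongrightarrow> reach_prob \<delta> T \<pi>1 \<pi>2 s"
  unfolding reach_prob_hitp
  by (rule LIMSEQ_incseq_SUP) (auto intro!: hitp_incseq bdd_aboveI[of _ 1] hitp_bounds)

lemma reach_bounds:
  fixes \<delta> :: "'s::finite \<Rightarrow> 'm::finite \<Rightarrow> 'm \<Rightarrow> 's pmf"
  shows "0 \<le> reach_prob \<delta> T \<pi>1 \<pi>2 s" "reach_prob \<delta> T \<pi>1 \<pi>2 s \<le> 1"
  using reach_lim[of \<delta> T \<pi>1 \<pi>2 s]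
  by (auto intro: LIMSEQ_le_const LIMSEQ_le_const2 hitp_bounds)

lemma hitp_le_reach:
  fixes \<delta> :: "'s::finite \<Rightarrow> 'm::finite \<Rightarrow> 'm \<Rightarrow> 's pmf"
  shows "hitp \<delta> T \<pi>1 \<pi>2 s n \<le> reach_prob \<delta> T \<pi>1 \<pi>2 s"
  unfolding reach_prob_hitp
  by (rule cSUP_upper) (auto intro!: bdd_aboveI[of _ 1] hitp_bounds)

lemma reach_Suc:
  fixes \<delta> :: "'s::finite \<Rightarrow> 'm::finite \<Rightarrow> 'm \<Rightarrow> 's pmf"
  assumes "s \<notin> T"
  shows "reach_prob \<delta> T \<pi>1 \<pi>2 s =
     wsum (\<pi>1 [s]) (\<pi>2 [s]) (\<delta> s) (\<lambda>t. reach_prob \<delta> T (hshift s \<pi>1) (hshift s \<pi>2) t)"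
proof -
  have 1: "(\<lambda>n. hitp \<delta> T \<pi>1 \<pi>2 s (Suc n)) \<longlonglongrightarrow> reach_prob \<delta> T \<pi>1 \<pi>2 s"
    using reach_lim LIMSEQ_Suc by blast
  have 2: "(\<lambda>n. hitp \<delta> T \<pi>1 \<pi>2 s (Suc n)) \<longlonglongrightarrow>
     wsum (\<pi>1 [s]) (\<pi>2 [s]) (\<delta> s) (\<lambda>t. reach_prob \<delta> T (hshift s \<pi>1) (hshift s \<pi>2) t)"
    unfolding hitp_Suc using assms by (simp add: tendsto_wsum reach_lim)
  show ?thesis using LIMSEQ_unique[OF 1 2] .
qed

lemma reach_cong:
  assumes "\<And>h. h \<noteq> [] \<Longrightarrow> hd h = s \<Longrightarrow> \<pi>1 h = \<pi>1' h"
    and "\<And>h. h \<noteq> [] \<Longrightarrow> hd h = s \<Longrightarrow> \<pi>2 h = \<pi>2' h"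
  shows "reach_prob \<delta> T \<pi>1 \<pi>2 s = reach_prob \<delta> T \<pi>1' \<pi>2' s"
proof -
  have "\<And>n. hist \<delta> s \<pi>1 \<pi>2 n = hist \<delta> s \<pi>1' \<pi>2' n"
    by (rule hist_cong) (use assms in auto)
  then show ?thesis unfolding reach_prob_def by simp
qed

lemma hitp_cong:
  assumes "\<And>h. h \<noteq> [] \<Longrightarrow> hd h = s \<Longrightarrow> \<pi>1 h = \<pi>1' h"
    and "\<And>h. h \<noteq> [] \<Longrightarrow> hd h = s \<Longrightarrow> \<pi>2 h = \<pi>2' h"
  shows "hitp \<delta> T \<pi>1 \<pi>2 s n = hitp \<delta> T \<pi>1' \<pi>2' s n"
proof -
  have "\<And>n. hist \<delta> s \<pi>1 \<pi>2 n = hist \<delta> s \<pi>1' \<pi>2' n"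
    by (rule hist_cong) (use assms in auto)
  then show ?thesis unfolding hitp_def by simp
qed

lemma hshift_strat: "\<pi> \<in> strategies G \<Longrightarrow> hshift s \<pi> \<in> strategies G"
  unfolding strategies_def hshift_def
proof (intro CollectI allI impI)
  fix h :: "'a list" assume a: "\<pi> \<in> {\<pi>. \<forall>h. h \<noteq> [] \<longrightarrow> set_pmf (\<pi> h) \<subseteq> G (last h)}" "h \<noteq> []"
  have "s # h \<noteq> []" by simp
  then have "set_pmf (\<pi> (s # h)) \<subseteq> G (last (s # h))" using a(1) by blast
  moreover have "last (s # h) = last h" using a(2) by (rule last_ConsR)
  ultimately show "set_pmf (\<pi> (s # h)) \<subseteq> G (last h)" by simp
qed

lemma memoryless_strat: "\<xi> \<in> selectors G \<Longrightarrow> memoryless \<xi> \<in> strategies G"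
  unfolding strategies_def selectors_def memoryless_def by simp

lemma hshift_memoryless: "h \<noteq> [] \<Longrightarrow> hshift s (memoryless \<gamma>) h = memoryless \<gamma> h"
  unfolding hshift_def memoryless_def by simp

lemma pmf1_supp:
  assumes "pmf p s = 1" "t \<in> set_pmf p" shows "t = s"
proof (rule ccontr)
  assume "t \<noteq> s"
  then have "measure_pmf.prob p {s, t} = pmf p s + pmf p t"
    by (simp add: measure_measure_pmf_finite)
  moreover have "pmf p t > 0" using assms(2) by (simp add: pmf_positive)
  moreover have "measure_pmf.prob p {s, t} \<le> 1" by simp
  ultimately show False using assms(1) by simp
qed

lemma unif_sel:
  fixes G :: "'s \<Rightarrow> 'm::finite set"
  assumes "\<And>s. G s \<noteq> {}" shows "unif_selector G \<in> selectors G"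
  unfolding selectors_def unif_selector_def using assms by simp

lemma sel_supp: "\<xi> \<in> selectors G \<Longrightarrow> set_pmf (\<xi> s) \<subseteq> G s"
  unfolding selectors_def by blast

lemma strat_supp: "\<pi> \<in> strategies G \<Longrightarrow> h \<noteq> [] \<Longrightarrow> set_pmf (\<pi> h) \<subseteq> G (last h)"
  unfolding strategies_def by blast

locale game =
  fixes G1 G2 :: "'s::finite \<Rightarrow> 'm::finite set"
    and \<delta> :: "'s \<Rightarrow> 'm \<Rightarrow> 'm \<Rightarrow> 's pmf"
    and T :: "'s set"
  assumes G1_ne: "\<And>s. G1 s \<noteq> {}"
    and G2_ne: "\<And>s. G2 s \<noteq> {}"
begin

lemma U1: "unif_selector G1 \<in> selectors G1" using unif_sel G1_ne by blast
lemma U2: "unif_selector G2 \<in> selectors G2" using unif_sel G2_ne by blast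
lemma S1_ne: "strategies G1 \<noteq> {}" using memoryless_strat[OF U1] by blast
lemma S2_ne: "strategies G2 \<noteq> {}" using memoryless_strat[OF U2] by blast
lemma sel1_ne: "selectors G1 \<noteq> {}" using U1 by blast
lemma sel2_ne: "selectors G2 \<noteq> {}" using U2 by blast

lemma bdd_reach: "bdd_below ((\<lambda>\<pi>2. reach_prob \<delta> T \<pi>1 \<pi>2 s) ` A)"
  by (rule bdd_belowI[of _ 0]) (auto simp: reach_bounds)

lemma val_le_reach: "\<pi>2 \<in> strategies G2 \<Longrightarrow> val1_strat G2 \<delta> T \<pi>1 s \<le> reach_prob \<delta> T \<pi>1 \<pi>2 s"
  unfolding val1_strat_def by (rule cINF_lower[OF bdd_reach])

lemma val_nonneg: "0 \<le> val1_strat G2 \<delta> T \<pi>1 s"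
  unfolding val1_strat_def by (rule cINF_greatest[OF S2_ne]) (simp add: reach_bounds)

lemma val_le1: "val1_strat G2 \<delta> T \<pi>1 s \<le> 1"
proof -
  obtain \<pi>2 where "\<pi>2 \<in> strategies G2" using S2_ne by blast
  then show ?thesis using val_le_reach[of \<pi>2 \<pi>1 s] reach_bounds(2)[of \<delta> T \<pi>1 \<pi>2 s] by linarith
qed

lemma val_approx:
  assumes "e > 0"
  shows "\<exists>\<pi>2\<in>strategies G2. reach_prob \<delta> T \<pi>1 \<pi>2 s < val1_strat G2 \<delta> T \<pi>1 s + e"
proof -
  have "val1_strat G2 \<delta> T \<pi>1 s < val1_strat G2 \<delta> T \<pi>1 s + e" using assms by simp
  then show ?thesis unfolding val1_strat_def
    using cINF_less_iff[OF S2_ne bdd_reach] by blast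
qed

lemma val_T: "s \<in> T \<Longrightarrow> val1_strat G2 \<delta> T \<pi>1 s = 1"
proof -
  assume s: "s \<in> T"
  have "1 \<le> val1_strat G2 \<delta> T \<pi>1 s"
    unfolding val1_strat_def
  proof (rule cINF_greatest[OF S2_ne])
    fix \<pi>2 show "1 \<le> reach_prob \<delta> T \<pi>1 \<pi>2 s"
      using hitp_le_reach[of \<delta> T \<pi>1 \<pi>2 s 0] s by (simp add: hitp_0)
  qed
  then show ?thesis using val_le1[of \<pi>1 s] by linarith
qed

lemma bdd_val: "bdd_above ((\<lambda>\<pi>1. val1_strat G2 \<delta> T \<pi>1 s) ` A)"
  by (rule bdd_aboveI[of _ 1]) (auto simp: val_le1)

lemma val1_ge: "\<pi>1 \<in> strategies G1 \<Longrightarrow> val1_strat G2 \<delta> T \<pi>1 s \<le> val1 G1 G2 \<delta> T s"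
  unfolding val1_def by (rule cSUP_upper[OF _ bdd_val])

lemma val1_nonneg: "0 \<le> val1 G1 G2 \<delta> T s"
  using S1_ne val1_ge val_nonneg by (meson all_not_in_conv order_trans)

lemma val1_le1: "val1 G1 G2 \<delta> T s \<le> 1"
  unfolding val1_def by (rule cSUP_least[OF S1_ne]) (simp add: val_le1)

lemma val1_le:
  assumes "\<And>\<pi>1. \<pi>1 \<in> strategies G1 \<Longrightarrow> val1_strat G2 \<delta> T \<pi>1 s \<le> x"
  shows "val1 G1 G2 \<delta> T s \<le> x"
  unfolding val1_def by (rule cSUP_least[OF S1_ne]) (use assms in auto)

lemma Pre_sel_nonneg: "(\<And>t. 0 \<le> v t) \<Longrightarrow> 0 \<le> Pre_sel G1 G2 \<delta> \<xi>1 \<xi>2 v s"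
  unfolding Pre_sel_def by (intro sum_nonneg mult_nonneg_nonneg) auto

lemma Pre_sel_le:
  "\<xi>1 \<in> selectors G1 \<Longrightarrow> \<xi>2 \<in> selectors G2 \<Longrightarrow> (\<And>t. v t \<le> B) \<Longrightarrow> Pre_sel G1 G2 \<delta> \<xi>1 \<xi>2 v s \<le> B"
  by (simp add: Pre_sel_wsum sel_supp wsum_le_const)

lemma bdd_Pre_sel: "(\<And>t. 0 \<le> v t) \<Longrightarrow> bdd_below ((\<lambda>\<xi>2. Pre_sel G1 G2 \<delta> \<xi>1 \<xi>2 v s) ` A)"
  by (rule bdd_belowI[of _ 0]) (auto simp: Pre_sel_nonneg)

lemma Pre1_sel_le: "(\<And>t. 0 \<le> v t) \<Longrightarrow> \<xi>2 \<in> selectors G2 \<Longrightarrow> Pre1_sel G1 G2 \<delta> \<xi>1 v s \<le> Pre_sel G1 G2 \<delta> \<xi>1 \<xi>2 v s"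
  unfolding Pre1_sel_def by (rule cINF_lower[OF bdd_Pre_sel])

lemma Pre1_sel_nonneg: "(\<And>t. 0 \<le> v t) \<Longrightarrow> 0 \<le> Pre1_sel G1 G2 \<delta> \<xi>1 v s"
  unfolding Pre1_sel_def by (rule cINF_greatest[OF sel2_ne]) (simp add: Pre_sel_nonneg)

lemma Pre1_sel_le_B: "\<xi>1 \<in> selectors G1 \<Longrightarrow> (\<And>t. 0 \<le> v t) \<Longrightarrow> (\<And>t. v t \<le> B) \<Longrightarrow> Pre1_sel G1 G2 \<delta> \<xi>1 v s \<le> B"
  using Pre1_sel_le[OF _ U2, of v \<xi>1 s] Pre_sel_le[OF _ U2, of \<xi>1 v B s] by fastforce

lemma Pre1_sel_approx:
  assumes "(\<And>t. 0 \<le> v t)" "e > 0"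
  shows "\<exists>\<xi>2\<in>selectors G2. Pre_sel G1 G2 \<delta> \<xi>1 \<xi>2 v s < Pre1_sel G1 G2 \<delta> \<xi>1 v s + e"
proof -
  have b: "bdd_below ((\<lambda>\<xi>2. Pre_sel G1 G2 \<delta> \<xi>1 \<xi>2 v s) ` selectors G2)"
    by (rule bdd_Pre_sel) (rule assms(1))
  have "Pre1_sel G1 G2 \<delta> \<xi>1 v s < Pre1_sel G1 G2 \<delta> \<xi>1 v s + e" using assms by simp
  then show ?thesis unfolding Pre1_sel_def
    using cINF_less_iff[OF sel2_ne b] by blast
qed

lemma bdd_Pre1_sel: "(\<And>t. 0 \<le> v t) \<Longrightarrow> (\<And>t. v t \<le> B) \<Longrightarrow> bdd_above ((\<lambda>\<xi>1. Pre1_sel G1 G2 \<delta> \<xi>1 v s) ` selectors G1)"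
  by (rule bdd_aboveI[of _ B]) (auto intro: Pre1_sel_le_B)

lemma Pre1_sel_le_Pre1: "\<xi>1 \<in> selectors G1 \<Longrightarrow> (\<And>t. 0 \<le> v t) \<Longrightarrow> (\<And>t. v t \<le> B) \<Longrightarrow>
   Pre1_sel G1 G2 \<delta> \<xi>1 v s \<le> Pre1 G1 G2 \<delta> v s"
  unfolding Pre1_def by (rule cSUP_upper[OF _ bdd_Pre1_sel])

lemma Pre1_le:
  assumes "\<And>\<xi>1. \<xi>1 \<in> selectors G1 \<Longrightarrow> Pre1_sel G1 G2 \<delta> \<xi>1 v s \<le> x"
  shows "Pre1 G1 G2 \<delta> v s \<le> x"
  unfolding Pre1_def by (rule cSUP_least[OF sel1_ne]) (use assms in auto)

lemma Pre_sel_mono: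
  "\<xi>1 \<in> selectors G1 \<Longrightarrow> \<xi>2 \<in> selectors G2 \<Longrightarrow> (\<And>t. v t \<le> w t) \<Longrightarrow> Pre_sel G1 G2 \<delta> \<xi>1 \<xi>2 v s \<le> Pre_sel G1 G2 \<delta> \<xi>1 \<xi>2 w s"
  by (simp add: Pre_sel_wsum sel_supp wsum_mono)

lemma Pre1_sel_mono:
  assumes "\<xi>1 \<in> selectors G1" "\<And>t. 0 \<le> v t" "\<And>t. v t \<le> w t"
  shows "Pre1_sel G1 G2 \<delta> \<xi>1 v s \<le> Pre1_sel G1 G2 \<delta> \<xi>1 w s"
  unfolding Pre1_sel_def[of _ _ _ _ w]
proof (rule cINF_greatest[OF sel2_ne])
  fix \<xi>2 assume "\<xi>2 \<in> selectors G2"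
  then show "Pre1_sel G1 G2 \<delta> \<xi>1 v s \<le> Pre_sel G1 G2 \<delta> \<xi>1 \<xi>2 w s"
    using Pre1_sel_le[of v \<xi>2 \<xi>1 s] Pre_sel_mono[of \<xi>1 \<xi>2 v w s] assms by fastforce
qed

lemma Pre1_mono:
  assumes "\<And>t. 0 \<le> v t" "\<And>t. v t \<le> w t" "\<And>t. w t \<le> B"
  shows "Pre1 G1 G2 \<delta> v s \<le> Pre1 G1 G2 \<delta> w s"
proof (rule Pre1_le)
  fix \<xi>1 assume a: "\<xi>1 \<in> selectors G1"
  have w0: "\<And>t. 0 \<le> w t" using assms(1,2) order_trans by blast
  show "Pre1_sel G1 G2 \<delta> \<xi>1 v s \<le> Pre1 G1 G2 \<delta> w s"
    using Pre1_sel_mono[OF a assms(1,2)] Pre1_sel_le_Pre1[OF a w0 assms(3)] by (meson order_trans)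
qed

lemma Pre1_add:
  assumes "\<And>t. 0 \<le> v t" "\<And>t. v t \<le> B" "c \<ge> 0"
  shows "Pre1 G1 G2 \<delta> (\<lambda>t. v t + c) s \<le> Pre1 G1 G2 \<delta> v s + c"
proof (rule Pre1_le)
  fix \<xi>1 assume a: "\<xi>1 \<in> selectors G1"
  have "Pre1_sel G1 G2 \<delta> \<xi>1 (\<lambda>t. v t + c) s - c \<le> Pre1_sel G1 G2 \<delta> \<xi>1 v s"
    unfolding Pre1_sel_def[of _ _ _ _ v]
  proof (rule cINF_greatest[OF sel2_ne])
    fix \<xi>2 assume b: "\<xi>2 \<in> selectors G2"
    have "Pre1_sel G1 G2 \<delta> \<xi>1 (\<lambda>t. v t + c) s \<le> Pre_sel G1 G2 \<delta> \<xi>1 \<xi>2 (\<lambda>t. v t + c) s"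
      using Pre1_sel_le[OF _ b] assms by (simp add: add_nonneg_nonneg)
    also have "\<dots> = Pre_sel G1 G2 \<delta> \<xi>1 \<xi>2 v s + c"
      using a b by (simp add: Pre_sel_wsum sel_supp wsum_add_const)
    finally show "Pre1_sel G1 G2 \<delta> \<xi>1 (\<lambda>t. v t + c) s - c \<le> Pre_sel G1 G2 \<delta> \<xi>1 \<xi>2 v s" by simp
  qed
  also have "\<dots> \<le> Pre1 G1 G2 \<delta> v s" by (rule Pre1_sel_le_Pre1[OF a assms(1,2)])
  finally show "Pre1_sel G1 G2 \<delta> \<xi>1 (\<lambda>t. v t + c) s \<le> Pre1 G1 G2 \<delta> v s + c" by simp
qed

lemma Pre_sel_absorbing:
  assumes "absorbing G1 G2 \<delta> s" "\<xi>1 \<in> selectors G1" "\<xi>2 \<in> selectors G2"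
  shows "Pre_sel G1 G2 \<delta> \<xi>1 \<xi>2 v s = v s"
proof -
  have ps: "Pre_sel G1 G2 \<delta> \<xi>1 \<xi>2 v s = wsum (\<xi>1 s) (\<xi>2 s) (\<delta> s) v"
    by (rule Pre_sel_wsum) (rule sel_supp[OF assms(2)], rule sel_supp[OF assms(3)])
  have ts: "t = s" if "0 < pmf (\<xi>1 s) a" "0 < pmf (\<xi>2 s) b" "0 < pmf (\<delta> s a b) t" for a b t
  proof -
    have "a \<in> set_pmf (\<xi>1 s)" "b \<in> set_pmf (\<xi>2 s)" and t: "t \<in> set_pmf (\<delta> s a b)"
      using that by (simp_all add: set_pmf_iff)
    then have "a \<in> G1 s" "b \<in> G2 s"
      using sel_supp[OF assms(2), of s] sel_supp[OF assms(3), of s] by blast+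
    then have "pmf (\<delta> s a b) s = 1" using assms(1) unfolding absorbing_def by blast
    then show "t = s" using t by (rule pmf1_supp)
  qed
  have "Pre_sel G1 G2 \<delta> \<xi>1 \<xi>2 v s = wsum (\<xi>1 s) (\<xi>2 s) (\<delta> s) (\<lambda>_. v s)"
    unfolding ps
    by (rule antisym; rule wsum_mono_supp; drule (2) ts; simp)
  then show ?thesis by (simp add: wsum_const)
qed

lemma Pre1_sel_absorbing:
  assumes "absorbing G1 G2 \<delta> s" "\<xi>1 \<in> selectors G1"
  shows "Pre1_sel G1 G2 \<delta> \<xi>1 v s = v s"
  unfolding Pre1_sel_def using Pre_sel_absorbing[OF assms] sel2_ne by simp

lemma Pre1_absorbing:
  assumes "absorbing G1 G2 \<delta> s"
  shows "Pre1 G1 G2 \<delta> v s = v s"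
  unfolding Pre1_def using Pre1_sel_absorbing[OF assms] sel1_ne by simp

end

context game begin

abbreviation vs where "vs \<gamma> \<equiv> val1_strat G2 \<delta> T (memoryless \<gamma>)"

lemma vs_bounds: "0 \<le> vs \<gamma> s" "vs \<gamma> s \<le> 1"
  by (simp_all add: val_nonneg val_le1)

lemma PSW: "set_pmf (\<xi>1 s) \<subseteq> G1 s \<Longrightarrow> set_pmf (\<xi>2 s) \<subseteq> G2 s \<Longrightarrow>
  Pre_sel G1 G2 \<delta> \<xi>1 \<xi>2 v s = wsum (\<xi>1 s) (\<xi>2 s) (\<delta> s) v"
  by (rule Pre_sel_wsum)

lemma PSW_sel: "\<xi>1 \<in> selectors G1 \<Longrightarrow> \<xi>2 \<in> selectors G2 \<Longrightarrow>
  Pre_sel G1 G2 \<delta> \<xi>1 \<xi>2 v s = wsum (\<xi>1 s) (\<xi>2 s) (\<delta> s) v"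
  by (rule PSW; erule sel_supp)

lemma mem_Cons1: "memoryless \<gamma> [s] = \<gamma> s" unfolding memoryless_def by simp

lemma bellman_le:
  assumes \<gamma>: "\<gamma> \<in> selectors G1" and s: "s \<notin> T" and \<xi>2: "\<xi>2 \<in> selectors G2"
  shows "vs \<gamma> s \<le> Pre_sel G1 G2 \<delta> \<gamma> \<xi>2 (vs \<gamma>) s"
proof (rule field_le_epsilon)
  fix e :: real assume e: "0 < e"
  have "\<forall>t. \<exists>\<pi>\<in>strategies G2. reach_prob \<delta> T (memoryless \<gamma>) \<pi> t < vs \<gamma> t + e"
    using val_approx[OF e] by blast
  then obtain P where P: "\<And>t. P t \<in> strategies G2" "\<And>t. reach_prob \<delta> T (memoryless \<gamma>) (P t) t < vs \<gamma> t + e"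
    by metis
  define \<pi>2 where "\<pi>2 = (\<lambda>h. case h of [] \<Rightarrow> \<xi>2 s | [x] \<Rightarrow> \<xi>2 x | x # y # r \<Rightarrow> P y (y # r))"
  have \<pi>2: "\<pi>2 \<in> strategies G2"
    unfolding strategies_def
  proof (intro CollectI allI impI)
    fix h :: "'s list" assume "h \<noteq> []"
    then obtain x r where h: "h = x # r" by (cases h) auto
    show "set_pmf (\<pi>2 h) \<subseteq> G2 (last h)"
    proof (cases r)
      case Nil then show ?thesis using h sel_supp[OF \<xi>2] by (simp add: \<pi>2_def)
    next
      case (Cons y r')
      have "set_pmf (P y (y # r')) \<subseteq> G2 (last (y # r'))" using strat_supp[OF P(1)] by blast
      then show ?thesis using h Cons by (simp add: \<pi>2_def)
    qed
  qed
  have cong: "reach_prob \<delta> T (hshift s (memoryless \<gamma>)) (hshift s \<pi>2) t = reach_prob \<delta> T (memoryless \<gamma>) (P t) t" for t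
  proof (rule reach_cong)
    fix h :: "'s list" assume h: "h \<noteq> []" "hd h = t"
    show "hshift s (memoryless \<gamma>) h = memoryless \<gamma> h" using h(1) by (rule hshift_memoryless)
    from h obtain r where "h = t # r" by (cases h) auto
    then show "hshift s \<pi>2 h = P t h" by (simp add: hshift_def \<pi>2_def)
  qed
  have p2s: "\<pi>2 [s] = \<xi>2 s" by (simp add: \<pi>2_def)
  have "vs \<gamma> s \<le> reach_prob \<delta> T (memoryless \<gamma>) \<pi>2 s" by (rule val_le_reach[OF \<pi>2])
  also have "\<dots> = wsum (\<gamma> s) (\<xi>2 s) (\<delta> s) (\<lambda>t. reach_prob \<delta> T (memoryless \<gamma>) (P t) t)"
    using reach_Suc[OF s, where \<delta>=\<delta> and ?\<pi>1.0="memoryless \<gamma>" and ?\<pi>2.0=\<pi>2] by (simp add: cong mem_Cons1 p2s)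
  also have "\<dots> \<le> wsum (\<gamma> s) (\<xi>2 s) (\<delta> s) (\<lambda>t. vs \<gamma> t + e)"
    by (rule wsum_mono) (simp add: P(2) less_imp_le)
  also have "\<dots> = Pre_sel G1 G2 \<delta> \<gamma> \<xi>2 (vs \<gamma>) s + e"
    by (simp add: wsum_add_const PSW_sel[OF \<gamma> \<xi>2])
  finally show "vs \<gamma> s \<le> Pre_sel G1 G2 \<delta> \<gamma> \<xi>2 (vs \<gamma>) s + e" .
qed

lemma bellman_ge:
  assumes \<gamma>: "\<gamma> \<in> selectors G1" and s: "s \<notin> T"
  shows "Pre1_sel G1 G2 \<delta> \<gamma> (vs \<gamma>) s \<le> vs \<gamma> s"
proof (rule field_le_epsilon)
  fix e :: real assume e: "0 < e"
  obtain \<pi>2 where \<pi>2: "\<pi>2 \<in> strategies G2" and lt: "reach_prob \<delta> T (memoryless \<gamma>) \<pi>2 s < vs \<gamma> s + e"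
    using val_approx[OF e] by blast
  define \<xi>2 where "\<xi>2 = (\<lambda>x. if x = s then \<pi>2 [s] else unif_selector G2 x)"
  have \<xi>2: "\<xi>2 \<in> selectors G2"
    unfolding selectors_def
  proof (intro CollectI allI)
    fix x show "set_pmf (\<xi>2 x) \<subseteq> G2 x"
      using strat_supp[OF \<pi>2, of "[s]"] sel_supp[OF U2, of x] by (simp add: \<xi>2_def)
  qed
  have "Pre1_sel G1 G2 \<delta> \<gamma> (vs \<gamma>) s \<le> Pre_sel G1 G2 \<delta> \<gamma> \<xi>2 (vs \<gamma>) s"
    by (rule Pre1_sel_le[OF _ \<xi>2]) (simp add: val_nonneg)
  also have "\<dots> = wsum (\<gamma> s) (\<pi>2 [s]) (\<delta> s) (vs \<gamma>)"
    using PSW_sel[OF \<gamma> \<xi>2] by (simp add: \<xi>2_def)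
  also have "\<dots> \<le> wsum (\<gamma> s) (\<pi>2 [s]) (\<delta> s) (\<lambda>t. reach_prob \<delta> T (memoryless \<gamma>) (hshift s \<pi>2) t)"
    by (rule wsum_mono) (rule val_le_reach[OF hshift_strat[OF \<pi>2]])
  also have "\<dots> = reach_prob \<delta> T (memoryless \<gamma>) \<pi>2 s"
  proof -
    have "reach_prob \<delta> T (hshift s (memoryless \<gamma>)) (hshift s \<pi>2) t = reach_prob \<delta> T (memoryless \<gamma>) (hshift s \<pi>2) t" for t
      by (rule reach_cong) (simp_all add: hshift_memoryless)
    then show ?thesis using reach_Suc[OF s, where \<delta>=\<delta> and ?\<pi>1.0="memoryless \<gamma>" and ?\<pi>2.0=\<pi>2] by (simp add: mem_Cons1)
  qed
  finally show "Pre1_sel G1 G2 \<delta> \<gamma> (vs \<gamma>) s \<le> vs \<gamma> s + e" using lt by simp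
qed

end

context game begin

definition c2 :: "('s \<Rightarrow> real) \<Rightarrow> ('s,'m) strategy \<Rightarrow> real \<Rightarrow> ('s,'m) strategy" where
  "c2 v \<pi>1 e = (\<lambda>h. SOME d. set_pmf d \<subseteq> G2 (last h) \<and>
      Pre_sel G1 G2 \<delta> (\<lambda>_. \<pi>1 h) (\<lambda>_. d) v (last h) \<le> v (last h) + e / 2 ^ length h)"

lemma c2_ex:
  assumes v0: "\<And>t. 0 \<le> v t" and v1: "\<And>t. v t \<le> 1" and pre: "\<And>x. Pre1 G1 G2 \<delta> v x \<le> v x"
    and p: "set_pmf p \<subseteq> G1 x" and e: "e > 0"
  shows "\<exists>d. set_pmf d \<subseteq> G2 x \<and> Pre_sel G1 G2 \<delta> (\<lambda>_. p) (\<lambda>_. d) v x \<le> v x + e"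
proof -
  define \<xi>1 where "\<xi>1 = (\<lambda>y. if y = x then p else unif_selector G1 y)"
  have \<xi>1: "\<xi>1 \<in> selectors G1"
    unfolding selectors_def
  proof (intro CollectI allI)
    fix y show "set_pmf (\<xi>1 y) \<subseteq> G1 y"
      using p sel_supp[OF U1, of y] by (simp add: \<xi>1_def)
  qed
  have "\<exists>\<xi>2\<in>selectors G2. Pre_sel G1 G2 \<delta> \<xi>1 \<xi>2 v x < Pre1_sel G1 G2 \<delta> \<xi>1 v x + e"
    by (rule Pre1_sel_approx) (simp_all add: v0 e)
  then obtain \<xi>2 where \<xi>2: "\<xi>2 \<in> selectors G2" and lt: "Pre_sel G1 G2 \<delta> \<xi>1 \<xi>2 v x < Pre1_sel G1 G2 \<delta> \<xi>1 v x + e"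
    by blast
  have "Pre1_sel G1 G2 \<delta> \<xi>1 v x \<le> Pre1 G1 G2 \<delta> v x"
    by (rule Pre1_sel_le_Pre1[OF \<xi>1 v0 v1])
  moreover have "Pre_sel G1 G2 \<delta> (\<lambda>_. p) (\<lambda>_. \<xi>2 x) v x = Pre_sel G1 G2 \<delta> \<xi>1 \<xi>2 v x"
    by (rule Pre_sel_cong) (simp_all add: \<xi>1_def)
  ultimately have "Pre_sel G1 G2 \<delta> (\<lambda>_. p) (\<lambda>_. \<xi>2 x) v x \<le> v x + e"
    using lt pre[of x] by linarith
  moreover have "set_pmf (\<xi>2 x) \<subseteq> G2 x" by (rule sel_supp[OF \<xi>2])
  ultimately show ?thesis by blast
qed

lemma c2_prop:
  assumes v0: "\<And>t. 0 \<le> v t" and v1: "\<And>t. v t \<le> 1" and pre: "\<And>x. Pre1 G1 G2 \<delta> v x \<le> v x"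
    and \<pi>1: "\<pi>1 \<in> strategies G1" and e: "e > 0" and h: "h \<noteq> []"
  shows "set_pmf (c2 v \<pi>1 e h) \<subseteq> G2 (last h) \<and>
      Pre_sel G1 G2 \<delta> (\<lambda>_. \<pi>1 h) (\<lambda>_. c2 v \<pi>1 e h) v (last h) \<le> v (last h) + e / 2 ^ length h"
  unfolding c2_def
  by (rule someI_ex, rule c2_ex[OF v0 v1 pre strat_supp[OF \<pi>1 h]]) (simp add: e)

lemma c2_strat:
  assumes v0: "\<And>t. 0 \<le> v t" and v1: "\<And>t. v t \<le> 1" and pre: "\<And>x. Pre1 G1 G2 \<delta> v x \<le> v x"
    and \<pi>1: "\<pi>1 \<in> strategies G1" and e: "e > 0"
  shows "c2 v \<pi>1 e \<in> strategies G2"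
  unfolding strategies_def using c2_prop[OF v0 v1 pre \<pi>1 e] by blast

lemma c2_shift:
  assumes "h \<noteq> []"
  shows "hshift s (c2 v \<pi>1 e) h = c2 v (hshift s \<pi>1) (e / 2) h"
proof -
  have "e / 2 ^ length (s # h) = e / 2 / 2 ^ length h" by simp
  then show ?thesis unfolding c2_def hshift_def using assms by simp
qed

lemma upper_bound:
  assumes v0: "\<And>t. 0 \<le> v t" and v1: "\<And>t. v t \<le> 1" and pre: "\<And>x. Pre1 G1 G2 \<delta> v x \<le> v x"
    and vT: "\<And>t. t \<in> T \<Longrightarrow> v t = 1"
  shows "val1 G1 G2 \<delta> T s \<le> v s"
proof -
  have main: "\<forall>s \<pi>1 e. \<pi>1 \<in> strategies G1 \<longrightarrow> e > 0 \<longrightarrow> hitp \<delta> T \<pi>1 (c2 v \<pi>1 e) s n \<le> v s + e" for n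
  proof (induction n)
    case 0
    show ?case using vT v0 by (auto simp: hitp_0 add_nonneg_pos less_imp_le)
  next
    case (Suc n)
    show ?case
    proof (intro allI impI)
      fix s \<pi>1 and e :: real assume \<pi>1: "\<pi>1 \<in> strategies G1" and e: "e > 0"
      show "hitp \<delta> T \<pi>1 (c2 v \<pi>1 e) s (Suc n) \<le> v s + e"
      proof (cases "s \<in> T")
        case True
        then show ?thesis using vT[OF True] e by (simp add: hitp_Suc)
      next
        case False
        have eq: "hitp \<delta> T (hshift s \<pi>1) (hshift s (c2 v \<pi>1 e)) t n =
             hitp \<delta> T (hshift s \<pi>1) (c2 v (hshift s \<pi>1) (e / 2)) t n" for t
          by (rule hitp_cong) (simp_all add: c2_shift)
        have ih: "hitp \<delta> T (hshift s \<pi>1) (c2 v (hshift s \<pi>1) (e / 2)) t n \<le> v t + e / 2" for t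
          using Suc.IH hshift_strat[OF \<pi>1] e by simp
        have cp: "set_pmf (c2 v \<pi>1 e [s]) \<subseteq> G2 s \<and>
          Pre_sel G1 G2 \<delta> (\<lambda>_. \<pi>1 [s]) (\<lambda>_. c2 v \<pi>1 e [s]) v s \<le> v s + e / 2"
          using c2_prop[OF v0 v1 pre \<pi>1 e, of "[s]"] by simp
        have ps: "Pre_sel G1 G2 \<delta> (\<lambda>_. \<pi>1 [s]) (\<lambda>_. c2 v \<pi>1 e [s]) v s = wsum (\<pi>1 [s]) (c2 v \<pi>1 e [s]) (\<delta> s) v"
          by (rule PSW) (use strat_supp[OF \<pi>1, of "[s]"] cp in auto)
        have "hitp \<delta> T \<pi>1 (c2 v \<pi>1 e) s (Suc n) =
           wsum (\<pi>1 [s]) (c2 v \<pi>1 e [s]) (\<delta> s) (\<lambda>t. hitp \<delta> T (hshift s \<pi>1) (c2 v (hshift s \<pi>1) (e / 2)) t n)"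
          using False by (simp add: hitp_Suc eq)
        also have "\<dots> \<le> wsum (\<pi>1 [s]) (c2 v \<pi>1 e [s]) (\<delta> s) (\<lambda>t. v t + e / 2)"
          by (rule wsum_mono) (rule ih)
        also have "\<dots> = wsum (\<pi>1 [s]) (c2 v \<pi>1 e [s]) (\<delta> s) v + e / 2" by (rule wsum_add_const)
        also have "\<dots> \<le> v s + e" using cp ps by simp
        finally show ?thesis .
      qed
    qed
  qed
  show ?thesis
  proof (rule val1_le)
    fix \<pi>1 assume \<pi>1: "\<pi>1 \<in> strategies G1"
    show "val1_strat G2 \<delta> T \<pi>1 s \<le> v s"
    proof (rule field_le_epsilon)
      fix e :: real assume e: "e > 0"
      have "val1_strat G2 \<delta> T \<pi>1 s \<le> reach_prob \<delta> T \<pi>1 (c2 v \<pi>1 e) s"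
        by (rule val_le_reach[OF c2_strat[OF v0 v1 pre \<pi>1 e]])
      also have "\<dots> \<le> v s + e"
        unfolding reach_prob_hitp by (rule cSUP_least) (use main \<pi>1 e in auto)
      finally show "val1_strat G2 \<delta> T \<pi>1 s \<le> v s + e" .
    qed
  qed
qed

end

lemma wsum_pos:
  assumes f0: "\<And>t. 0 \<le> f t" and pa: "0 < pmf p a" and pb: "0 < pmf q b" and pt: "0 < pmf (d a b) t" and ft: "0 < f t"
  shows "0 < wsum p q d f"
proof -
  let ?g = "\<lambda>a b t. pmf p a * pmf q b * pmf (d a b) t * f t"
  have g0: "\<And>a b t. 0 \<le> ?g a b t" using f0 by simp
  have "0 < ?g a b t" using pa pb pt ft by simp
  also have "\<dots> \<le> (\<Sum>t'\<in>UNIV. ?g a b t')" by (rule member_le_sum) (use g0 in auto)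
  also have "\<dots> \<le> (\<Sum>b'\<in>UNIV. \<Sum>t'\<in>UNIV. ?g a b' t')"
    by (rule member_le_sum[where f="\<lambda>b'. \<Sum>t'\<in>UNIV. ?g a b' t'"]) (auto intro: sum_nonneg g0)
  also have "\<dots> \<le> (\<Sum>a'\<in>UNIV. \<Sum>b'\<in>UNIV. \<Sum>t'\<in>UNIV. ?g a' b' t')"
    by (rule member_le_sum[where f="\<lambda>a'. \<Sum>b'\<in>UNIV. \<Sum>t'\<in>UNIV. ?g a' b' t'"]) (auto intro: sum_nonneg g0)
  finally show ?thesis unfolding wsum_def .
qed

lemma wsum_strict:
  assumes le: "\<And>a b t. pmf p a > 0 \<Longrightarrow> pmf q b > 0 \<Longrightarrow> pmf (d a b) t > 0 \<Longrightarrow> f t \<le> g t"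
    and pa: "0 < pmf p a" and pb: "0 < pmf q b" and pt: "0 < pmf (d a b) t" and lt: "f t < g t"
  shows "wsum p q d f < wsum p q d g"
proof -
  have "0 < wsum p q d (\<lambda>t. max 0 (g t - f t))"
    by (rule wsum_pos[of "\<lambda>t. max 0 (g t - f t)" p a q b d t]) (use lt pa pb pt in auto)
  also have "\<dots> \<le> wsum p q d (\<lambda>t. g t - f t)"
    by (rule wsum_mono_supp) (use le in force)
  also have "\<dots> = wsum p q d g - wsum p q d f" by (rule wsum_diff)
  finally show ?thesis by simp
qed

lemma wsum_return_decomp: "wsum p q d x = (\<Sum>b\<in>UNIV. pmf q b * wsum p (return_pmf b) d x)"
proof -
  have "wsum p (return_pmf b) d x = (\<Sum>a\<in>UNIV. \<Sum>t\<in>UNIV. pmf p a * pmf (d a b) t * x t)" for b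
  proof -
    have "wsum p (return_pmf b) d x = (\<Sum>a\<in>UNIV. \<Sum>b'\<in>UNIV. (if b' = b then (\<Sum>t\<in>UNIV. pmf p a * pmf (d a b') t * x t) else 0))"
      unfolding wsum_def by (intro sum.cong refl) (auto simp: indicator_def)
    also have "\<dots> = (\<Sum>a\<in>UNIV. \<Sum>t\<in>UNIV. pmf p a * pmf (d a b) t * x t)"
      by (simp add: sum.delta')
    finally show ?thesis .
  qed
  then have "(\<Sum>b\<in>UNIV. pmf q b * wsum p (return_pmf b) d x) =
     (\<Sum>b\<in>UNIV. \<Sum>a\<in>UNIV. \<Sum>t\<in>UNIV. pmf p a * pmf q b * pmf (d a b) t * x t)"
    by (simp add: sum_distrib_left mult_ac)
  also have "\<dots> = wsum p q d x" unfolding wsum_def by (rule sum.swap)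
  finally show ?thesis by simp
qed

lemma wsum_le_Max:
  assumes "set_pmf q \<subseteq> A" "finite A" "A \<noteq> {}"
  shows "wsum p q d x \<le> Max ((\<lambda>b. wsum p (return_pmf b) d x) ` A)"
proof -
  let ?M = "Max ((\<lambda>b. wsum p (return_pmf b) d x) ` A)"
  have "wsum p q d x = (\<Sum>b\<in>UNIV. pmf q b * wsum p (return_pmf b) d x)" by (rule wsum_return_decomp)
  also have "\<dots> \<le> (\<Sum>b\<in>UNIV. pmf q b * ?M)"
  proof (rule sum_mono)
    fix b
    show "pmf q b * wsum p (return_pmf b) d x \<le> pmf q b * ?M"
    proof (cases "b \<in> A")
      case True then show ?thesis using assms by (intro mult_left_mono) auto
    next
      case False then have "pmf q b = 0" using assms(1) by (auto simp: pmf_eq_0_set_pmf)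
      then show ?thesis by simp
    qed
  qed
  also have "\<dots> = ?M" by (simp add: sum_pmf_UNIV flip: sum_distrib_right)
  finally show ?thesis .
qed

locale game2 = game G1 G2 \<delta> T
  for G1 G2 :: "'s::finite \<Rightarrow> 'm::finite set" and \<delta> :: "'s \<Rightarrow> 'm \<Rightarrow> 'm \<Rightarrow> 's pmf" and T :: "'s set" +
  assumes absorb: "\<And>s. s \<in> T \<union> W2 G1 G2 \<delta> T \<Longrightarrow> absorbing G1 G2 \<delta> s"
begin

abbreviation RR where "RR \<equiv> T \<union> W2 G1 G2 \<delta> T"

definition trap :: "('s,'m) selector \<Rightarrow> 's set \<Rightarrow> bool" where
  "trap \<gamma> C \<longleftrightarrow> C \<noteq> {} \<and> C \<inter> RR = {} \<and>
     (\<forall>s\<in>C. \<exists>b\<in>G2 s. \<forall>a\<in>G1 s. pmf (\<gamma> s) a > 0 \<longrightarrow> set_pmf (\<delta> s a b) \<subseteq> C)"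

definition proper :: "('s,'m) selector \<Rightarrow> bool" where
  "proper \<gamma> \<longleftrightarrow> \<not> (\<exists>C. trap \<gamma> C)"

lemma vs_W2: "s \<in> W2 G1 G2 \<delta> T \<Longrightarrow> \<gamma> \<in> selectors G1 \<Longrightarrow> vs \<gamma> s = 0"
proof -
  assume a: "s \<in> W2 G1 G2 \<delta> T" "\<gamma> \<in> selectors G1"
  have "memoryless \<gamma> \<in> strategies G1" by (rule memoryless_strat[OF a(2)])
  then have "vs \<gamma> s \<le> val1 G1 G2 \<delta> T s" by (rule val1_ge)
  then show ?thesis using a(1) val_nonneg[of "memoryless \<gamma>" s] unfolding W2_def by simp
qed

lemma unif_pos: "a \<in> G1 s \<Longrightarrow> 0 < pmf (unif_selector G1 s) a"
  unfolding unif_selector_def using G1_ne[of s] by (simp add: card_gt_0_iff)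

lemma uniform_proper: "proper (unif_selector G1)"
  unfolding proper_def
proof
  assume "\<exists>C. trap (unif_selector G1) C"
  then obtain C where C: "trap (unif_selector G1) C" by blast
  have "\<forall>s. \<exists>b. b \<in> G2 s \<and> (s \<in> C \<longrightarrow> (\<forall>a\<in>G1 s. set_pmf (\<delta> s a b) \<subseteq> C))"
  proof
    fix s show "\<exists>b. b \<in> G2 s \<and> (s \<in> C \<longrightarrow> (\<forall>a\<in>G1 s. set_pmf (\<delta> s a b) \<subseteq> C))"
    proof (cases "s \<in> C")
      case True
      then show ?thesis using C unif_pos unfolding trap_def by blast
    next
      case False
      then show ?thesis using G2_ne[of s] by blast
    qed
  qed
  then obtain B where B: "\<And>s. B s \<in> G2 s" "\<And>s a. s \<in> C \<Longrightarrow> a \<in> G1 s \<Longrightarrow> set_pmf (\<delta> s a (B s)) \<subseteq> C"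
    by metis
  have CR: "C \<inter> RR = {}" using C unfolding trap_def by blast
  have main: "\<forall>s \<pi>1 \<pi>2. s \<in> C \<longrightarrow> \<pi>1 \<in> strategies G1 \<longrightarrow> (\<forall>h. h \<noteq> [] \<longrightarrow> \<pi>2 h = return_pmf (B (last h))) \<longrightarrow>
     hitp \<delta> T \<pi>1 \<pi>2 s n = 0" for n
  proof (induction n)
    case 0 then show ?case using CR by (auto simp: hitp_0)
  next
    case (Suc n)
    show ?case
    proof (intro allI impI)
      fix s \<pi>1 \<pi>2 assume s: "s \<in> C" and \<pi>1: "\<pi>1 \<in> strategies G1"
        and \<pi>2: "\<forall>h. h \<noteq> [] \<longrightarrow> \<pi>2 h = return_pmf (B (last h))"
      have sT: "s \<notin> T" using s CR by blast
      have sh2: "\<forall>h. h \<noteq> [] \<longrightarrow> hshift s \<pi>2 h = return_pmf (B (last h))"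
        using \<pi>2 by (simp add: hshift_def)
      have "hitp \<delta> T \<pi>1 \<pi>2 s (Suc n) = wsum (\<pi>1 [s]) (\<pi>2 [s]) (\<delta> s) (\<lambda>t. hitp \<delta> T (hshift s \<pi>1) (hshift s \<pi>2) t n)"
        using sT by (simp add: hitp_Suc)
      also have "\<dots> \<le> wsum (\<pi>1 [s]) (\<pi>2 [s]) (\<delta> s) (\<lambda>t. 0)"
      proof (rule wsum_mono_supp)
        fix a b t assume pa: "0 < pmf (\<pi>1 [s]) a" and pb: "0 < pmf (\<pi>2 [s]) b" and pt: "0 < pmf (\<delta> s a b) t"
        have "b = B s" using pb \<pi>2 by (simp split: split_indicator_asm)
        have "a \<in> G1 s" using pa strat_supp[OF \<pi>1, of "[s]"] by (auto simp: set_pmf_iff)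
        moreover have "t \<in> set_pmf (\<delta> s a b)" using pt by (simp add: set_pmf_iff)
        ultimately have "t \<in> C" using B(2)[OF s] \<open>b = B s\<close> by blast
        then show "hitp \<delta> T (hshift s \<pi>1) (hshift s \<pi>2) t n \<le> 0"
          using Suc.IH hshift_strat[OF \<pi>1] sh2 by simp
      qed
      also have "\<dots> = 0" by (rule wsum_const)
      finally show "hitp \<delta> T \<pi>1 \<pi>2 s (Suc n) = 0" using hitp_bounds(1) by (meson antisym)
    qed
  qed
  obtain s where s: "s \<in> C" using C unfolding trap_def by blast
  define \<pi>2 where "\<pi>2 = (\<lambda>h::'s list. return_pmf (B (last h)) :: 'm pmf)"
  have \<pi>2: "\<pi>2 \<in> strategies G2" unfolding strategies_def \<pi>2_def using B(1) by simp
  have "val1 G1 G2 \<delta> T s \<le> 0"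
  proof (rule val1_le)
    fix \<pi>1 assume \<pi>1: "\<pi>1 \<in> strategies G1"
    have "reach_prob \<delta> T \<pi>1 \<pi>2 s = 0"
      unfolding reach_prob_hitp using main s \<pi>1 by (simp add: \<pi>2_def)
    then show "val1_strat G2 \<delta> T \<pi>1 s \<le> 0" using val_le_reach[OF \<pi>2, of \<pi>1 s] by simp
  qed
  then have "s \<in> W2 G1 G2 \<delta> T" unfolding W2_def using val1_nonneg[of s] by simp
  then show False using s CR by blast
qed


lemma sel_pos: "\<xi> \<in> selectors G \<Longrightarrow> 0 < pmf (\<xi> s) a \<Longrightarrow> a \<in> G s"
  using sel_supp[of \<xi> G s] by (auto simp: set_pmf_iff)

lemma ret_sel:
  assumes b: "b \<in> G2 s"
  shows "(\<lambda>x. if x = s then return_pmf b else unif_selector G2 x) \<in> selectors G2"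
  unfolding selectors_def
proof (intro CollectI allI)
  fix x show "set_pmf (if x = s then return_pmf b else unif_selector G2 x) \<subseteq> G2 x"
    using b sel_supp[OF U2, of x] by auto
qed

lemma improve_proper:
  assumes \<gamma>: "\<gamma> \<in> selectors G1" and p\<gamma>: "proper \<gamma>" and \<gamma>': "\<gamma>' \<in> selectors G1"
    and same: "\<And>s. s \<notin> I \<Longrightarrow> \<gamma>' s = \<gamma> s"
    and imp: "\<And>s. s \<in> I \<Longrightarrow> vs \<gamma> s < Pre1_sel G1 G2 \<delta> \<gamma>' (vs \<gamma>) s"
  shows "proper \<gamma>'"
  unfolding proper_def
proof
  assume "\<exists>C. trap \<gamma>' C"
  then obtain C where C: "trap \<gamma>' C" by blast
  let ?v = "vs \<gamma>"
  define M where "M = Max (?v ` C)"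
  define CM where "CM = {s\<in>C. ?v s = M}"
  have Cne: "C \<noteq> {}" and CR: "C \<inter> RR = {}" using C unfolding trap_def by auto
  have vM: "\<And>t. t \<in> C \<Longrightarrow> ?v t \<le> M" unfolding M_def by simp
  have "M \<in> ?v ` C" unfolding M_def using Cne by simp
  then have CMne: "CM \<noteq> {}" unfolding CM_def by auto
  have "trap \<gamma> CM"
    unfolding trap_def
  proof (intro conjI ballI)
    show "CM \<noteq> {}" by (rule CMne)
    show "CM \<inter> RR = {}" using CR unfolding CM_def by auto
  next
    fix s assume sCM: "s \<in> CM"
    then have sC: "s \<in> C" and vs: "?v s = M" unfolding CM_def by auto
    have sT: "s \<notin> T" using sC CR by blast
    obtain b where b: "b \<in> G2 s" and bt: "\<And>a. a \<in> G1 s \<Longrightarrow> pmf (\<gamma>' s) a > 0 \<Longrightarrow> set_pmf (\<delta> s a b) \<subseteq> C"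
      using C sC unfolding trap_def by blast
    define \<xi>2 where "\<xi>2 = (\<lambda>x. if x = s then return_pmf b else unif_selector G2 x)"
    have \<xi>2: "\<xi>2 \<in> selectors G2" unfolding \<xi>2_def by (rule ret_sel[OF b])
    have x2s: "\<xi>2 s = return_pmf b" by (simp add: \<xi>2_def)
    have le: "wsum (\<gamma>' s) (return_pmf b) (\<delta> s) ?v \<le> wsum (\<gamma>' s) (return_pmf b) (\<delta> s) (\<lambda>_. M)"
    proof (rule wsum_mono_supp)
      fix a b' t assume pa: "0 < pmf (\<gamma>' s) a" and pb: "0 < pmf (return_pmf b) b'" and pt: "0 < pmf (\<delta> s a b') t"
      have "b' = b" using pb by (simp split: split_indicator_asm)
      have "a \<in> G1 s" by (rule sel_pos[OF \<gamma>' pa])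
      moreover have "t \<in> set_pmf (\<delta> s a b)" using pt \<open>b' = b\<close> by (simp add: set_pmf_iff)
      ultimately have "t \<in> C" using bt pa by blast
      then show "?v t \<le> M" by (rule vM)
    qed
    have sI: "s \<notin> I"
    proof
      assume sI: "s \<in> I"
      have "Pre1_sel G1 G2 \<delta> \<gamma>' ?v s \<le> Pre_sel G1 G2 \<delta> \<gamma>' \<xi>2 ?v s"
        by (rule Pre1_sel_le[OF _ \<xi>2]) (simp add: val_nonneg)
      also have "\<dots> = wsum (\<gamma>' s) (return_pmf b) (\<delta> s) ?v" by (simp add: PSW_sel[OF \<gamma>' \<xi>2] x2s)
      also have "\<dots> \<le> M" using le by (simp add: wsum_const)
      finally show False using imp[OF sI] vs by simp
    qed
    then have g: "\<gamma>' s = \<gamma> s" by (rule same)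
    have ge: "M \<le> wsum (\<gamma> s) (return_pmf b) (\<delta> s) ?v"
      using bellman_le[OF \<gamma> sT \<xi>2] vs by (simp add: PSW_sel[OF \<gamma> \<xi>2] x2s)
    show "\<exists>b\<in>G2 s. \<forall>a\<in>G1 s. 0 < pmf (\<gamma> s) a \<longrightarrow> set_pmf (\<delta> s a b) \<subseteq> CM"
    proof (intro bexI[OF _ b] ballI impI subsetI)
      fix a t assume a: "a \<in> G1 s" and pa: "0 < pmf (\<gamma> s) a" and t: "t \<in> set_pmf (\<delta> s a b)"
      have tC: "t \<in> C" using bt[OF a] pa g t by auto
      show "t \<in> CM"
      proof (rule ccontr)
        assume "t \<notin> CM"
        then have lt: "?v t < M" using tC vM[OF tC] unfolding CM_def by auto
        have "wsum (\<gamma> s) (return_pmf b) (\<delta> s) ?v < wsum (\<gamma> s) (return_pmf b) (\<delta> s) (\<lambda>_. M)"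
        proof (rule wsum_strict[where a=a and b=b and t=t])
          fix a' b' t' assume pa': "0 < pmf (\<gamma> s) a'" and pb': "0 < pmf (return_pmf b) b'" and pt': "0 < pmf (\<delta> s a' b') t'"
          have "b' = b" using pb' by (simp split: split_indicator_asm)
          have "a' \<in> G1 s" by (rule sel_pos[OF \<gamma> pa'])
          moreover have "t' \<in> set_pmf (\<delta> s a' b)" using pt' \<open>b' = b\<close> by (simp add: set_pmf_iff)
          ultimately have "t' \<in> C" using bt pa' g by auto
          then show "?v t' \<le> M" by (rule vM)
        qed (use pa t lt in \<open>auto simp: set_pmf_iff\<close>)
        then show False using ge by (simp add: wsum_const)
      qed
    qed
  qed
  then show False using p\<gamma> unfolding proper_def by blast
qed

end

context game2 begin

definition Phi :: "('s,'m) selector \<Rightarrow> ('s \<Rightarrow> real) \<Rightarrow> 's \<Rightarrow> real" where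
  "Phi \<gamma> x s = (if s \<in> RR then 0 else Max ((\<lambda>b. wsum (\<gamma> s) (return_pmf b) (\<delta> s) x) ` G2 s))"

definition X :: "('s,'m) selector \<Rightarrow> nat \<Rightarrow> 's \<Rightarrow> real" where
  "X \<gamma> n = (Phi \<gamma> ^^ n) (\<lambda>_. 1)"

lemma X_0: "X \<gamma> 0 = (\<lambda>_. 1)" by (simp add: X_def)
lemma X_Suc: "X \<gamma> (Suc n) = Phi \<gamma> (X \<gamma> n)" by (simp add: X_def)

lemma G2_fin: "finite (G2 s)" by simp

lemma Phi_mono:
  assumes "\<And>t. x t \<le> y t" shows "Phi \<gamma> x s \<le> Phi \<gamma> y s"
proof (cases "s \<in> RR")
  case False
  have "Max ((\<lambda>b. wsum (\<gamma> s) (return_pmf b) (\<delta> s) x) ` G2 s) \<le> Max ((\<lambda>b. wsum (\<gamma> s) (return_pmf b) (\<delta> s) y) ` G2 s)"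
  proof (subst Max_le_iff, simp, simp add: G2_ne, intro ballI)
    fix z assume "z \<in> (\<lambda>b. wsum (\<gamma> s) (return_pmf b) (\<delta> s) x) ` G2 s"
    then obtain b where b: "b \<in> G2 s" and z: "z = wsum (\<gamma> s) (return_pmf b) (\<delta> s) x" by blast
    have "z \<le> wsum (\<gamma> s) (return_pmf b) (\<delta> s) y" unfolding z by (rule wsum_mono) (rule assms)
    also have "\<dots> \<le> Max ((\<lambda>b. wsum (\<gamma> s) (return_pmf b) (\<delta> s) y) ` G2 s)"
      by (rule Max_ge) (use b in auto)
    finally show "z \<le> Max ((\<lambda>b. wsum (\<gamma> s) (return_pmf b) (\<delta> s) y) ` G2 s)" .
  qed
  then show ?thesis using False unfolding Phi_def by simp
qed (simp add: Phi_def)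

lemma Phi_bounds:
  assumes "\<And>t. 0 \<le> x t" "\<And>t. x t \<le> 1"
  shows "0 \<le> Phi \<gamma> x s" "Phi \<gamma> x s \<le> 1"
proof -
  obtain b where b: "b \<in> G2 s" using G2_ne[of s] by blast
  have "0 \<le> wsum (\<gamma> s) (return_pmf b) (\<delta> s) x" by (rule wsum_nonneg) (rule assms)
  also have "\<dots> \<le> Max ((\<lambda>b. wsum (\<gamma> s) (return_pmf b) (\<delta> s) x) ` G2 s)"
    by (rule Max_ge) (use b in auto)
  finally have 1: "0 \<le> Max ((\<lambda>b. wsum (\<gamma> s) (return_pmf b) (\<delta> s) x) ` G2 s)" .
  have 2: "Max ((\<lambda>b. wsum (\<gamma> s) (return_pmf b) (\<delta> s) x) ` G2 s) \<le> 1"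
    using G2_ne[of s] by (simp add: wsum_le_const assms)
  show "0 \<le> Phi \<gamma> x s" "Phi \<gamma> x s \<le> 1" using 1 2 unfolding Phi_def by auto
qed

lemma X_bounds: "0 \<le> X \<gamma> n s \<and> X \<gamma> n s \<le> 1"
proof (induction n arbitrary: s)
  case 0 then show ?case by (simp add: X_0)
next
  case (Suc n) then show ?case by (simp add: X_Suc Phi_bounds)
qed

lemma X_dec: "X \<gamma> (Suc n) s \<le> X \<gamma> n s"
proof (induction n arbitrary: s)
  case 0 then show ?case using Phi_bounds(2)[of "\<lambda>_. 1" \<gamma> s] by (simp add: X_Suc X_0)
next
  case (Suc n) then show ?case unfolding X_Suc[of \<gamma> "Suc n"] X_Suc[of \<gamma> n] by (rule Phi_mono)
qed

lemma X_RR: "s \<in> RR \<Longrightarrow> X \<gamma> (Suc n) s = 0" by (simp add: X_Suc Phi_def)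

lemma X_lim:
  assumes p: "proper \<gamma>"
  shows "(\<lambda>n. X \<gamma> n s) \<longlonglongrightarrow> 0"
proof -
  define W where "W = (\<lambda>s. INF n. X \<gamma> n s)"
  have bb: "bdd_below (range (\<lambda>n. X \<gamma> n s))" for s
    by (rule bdd_belowI[of _ 0]) (auto simp: X_bounds)
  have lim: "(\<lambda>n. X \<gamma> n s) \<longlonglongrightarrow> W s" for s
    unfolding W_def by (rule LIMSEQ_decseq_INF[OF bb]) (rule decseq_SucI, rule X_dec)
  have WX: "W s \<le> X \<gamma> n s" for s n unfolding W_def by (rule cINF_lower[OF bb]) simp
  have W0: "0 \<le> W s" for s unfolding W_def by (rule cINF_greatest) (auto simp: X_bounds)
  have "W s = 0" for s
  proof (rule ccontr)
    assume "W s \<noteq> 0"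
    then have Ws: "W s > 0" using W0[of s] by simp
    define M where "M = Max (range W)"
    define C where "C = {s. W s = M}"
    have WM: "W t \<le> M" for t unfolding M_def by simp
    have "M \<in> range W" unfolding M_def by simp
    then have Cne: "C \<noteq> {}" unfolding C_def by auto
    have Mpos: "M > 0" using WM[of s] Ws by simp
    have "trap \<gamma> C"
      unfolding trap_def
    proof (intro conjI ballI)
      show "C \<noteq> {}" by (rule Cne)
      show "C \<inter> RR = {}"
      proof (rule ccontr)
        assume "C \<inter> RR \<noteq> {}"
        then obtain t where "t \<in> C" "t \<in> RR" by blast
        then have "W t = M" "W t \<le> 0" using WX[of t 1] X_RR[of t \<gamma> 0] unfolding C_def by auto
        then show False using Mpos by simp
      qed
    next
      fix u assume uC: "u \<in> C"
      have uR: "u \<notin> RR"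
      proof
        assume "u \<in> RR"
        then have "W u \<le> 0" using WX[of u 1] X_RR[of u \<gamma> 0] by simp
        then show False using uC Mpos unfolding C_def by simp
      qed
      show "\<exists>b\<in>G2 u. \<forall>a\<in>G1 u. 0 < pmf (\<gamma> u) a \<longrightarrow> set_pmf (\<delta> u a b) \<subseteq> C"
      proof (rule ccontr)
        assume nt: "\<not> ?thesis"
        let ?g = "\<lambda>b. wsum (\<gamma> u) (return_pmf b) (\<delta> u) W"
        have glt: "?g b < M" if b: "b \<in> G2 u" for b
        proof -
          obtain a t where a: "a \<in> G1 u" "0 < pmf (\<gamma> u) a" and t: "t \<in> set_pmf (\<delta> u a b)" "t \<notin> C"
            using nt b by blast
          have "?g b < wsum (\<gamma> u) (return_pmf b) (\<delta> u) (\<lambda>_. M)"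
            by (rule wsum_strict[where a=a and b=b and t=t]) (use WM a t in \<open>auto simp: set_pmf_iff C_def order.strict_iff_order\<close>)
          then show ?thesis by (simp add: wsum_const)
        qed
        define c where "c = Max (?g ` G2 u)"
        have cM: "c < M" unfolding c_def using glt G2_ne[of u] by simp
        have ev: "\<forall>\<^sub>F n in sequentially. \<forall>b\<in>G2 u. wsum (\<gamma> u) (return_pmf b) (\<delta> u) (X \<gamma> n) < (c + M) / 2"
        proof (rule eventually_ball_finite[OF G2_fin], rule ballI)
          fix b assume b: "b \<in> G2 u"
          have "(\<lambda>n. wsum (\<gamma> u) (return_pmf b) (\<delta> u) (X \<gamma> n)) \<longlonglongrightarrow> ?g b"
            by (rule tendsto_wsum) (rule lim)
          moreover have "?g b \<le> c" unfolding c_def by (rule Max_ge) (use b in auto)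
          then have "?g b < (c + M) / 2" using cM by simp
          ultimately show "\<forall>\<^sub>F n in sequentially. wsum (\<gamma> u) (return_pmf b) (\<delta> u) (X \<gamma> n) < (c + M) / 2"
            by (rule order_tendstoD(2))
        qed
        then obtain N where N: "\<forall>b\<in>G2 u. wsum (\<gamma> u) (return_pmf b) (\<delta> u) (X \<gamma> N) < (c + M) / 2"
          unfolding eventually_sequentially by blast
        have "X \<gamma> (Suc N) u = Max ((\<lambda>b. wsum (\<gamma> u) (return_pmf b) (\<delta> u) (X \<gamma> N)) ` G2 u)"
          using uR by (simp add: X_Suc Phi_def)
        also have "\<dots> < (c + M) / 2"
          by (subst Max_less_iff) (use N G2_ne[of u] in auto)
        finally have "X \<gamma> (Suc N) u < M" using cM by simp
        moreover have "M \<le> X \<gamma> (Suc N) u" using WX[of u "Suc N"] uC unfolding C_def by simp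
        ultimately show False by simp
      qed
    qed
    then show False using p unfolding proper_def by blast
  qed
  then show ?thesis using lim[of s] by simp
qed

end

context game2 begin

lemma wsum_sub1: "wsum p q d (\<lambda>t. v t - (1 - h t)) = wsum p q d v - (1 - wsum p q d h)"
  by (simp add: wsum_diff wsum_const)

lemma wsum_1m: "wsum p q d (\<lambda>t. 1 - h t) = 1 - wsum p q d h"
  by (simp add: wsum_diff wsum_const)

lemma improve_ge:
  assumes \<gamma>': "\<gamma>' \<in> selectors G1" and p: "proper \<gamma>'"
    and v0: "\<And>t. 0 \<le> v t" and v1: "\<And>t. v t \<le> 1"
    and vT: "\<And>t. t \<in> T \<Longrightarrow> v t = 1" and vW: "\<And>t. t \<in> W2 G1 G2 \<delta> T \<Longrightarrow> v t = 0"
    and pre: "\<And>s \<xi>2. s \<notin> RR \<Longrightarrow> \<xi>2 \<in> selectors G2 \<Longrightarrow> v s \<le> Pre_sel G1 G2 \<delta> \<gamma>' \<xi>2 v s"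
  shows "v s \<le> vs \<gamma>' s"
proof -
  let ?m = "memoryless \<gamma>'"
  have cg: "hitp \<delta> A (hshift s ?m) (hshift s \<pi>2) t n = hitp \<delta> A ?m (hshift s \<pi>2) t n" for A s \<pi>2 t n
    by (rule hitp_cong) (simp_all add: hshift_memoryless)
  have claim1: "\<forall>s \<pi>2. \<pi>2 \<in> strategies G2 \<longrightarrow>
      v s - (1 - hitp \<delta> RR ?m \<pi>2 s n) \<le> hitp \<delta> T ?m \<pi>2 s n" for n
  proof (induction n)
    case 0
    show ?case
    proof (intro allI impI)
      fix s \<pi>2
      show "v s - (1 - hitp \<delta> RR ?m \<pi>2 s 0) \<le> hitp \<delta> T ?m \<pi>2 s 0"
        using vT[of s] vW[of s] v1[of s] by (auto simp: hitp_0)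
    qed
  next
    case (Suc n)
    show ?case
    proof (intro allI impI)
      fix s \<pi>2 assume \<pi>2: "\<pi>2 \<in> strategies G2"
      show "v s - (1 - hitp \<delta> RR ?m \<pi>2 s (Suc n)) \<le> hitp \<delta> T ?m \<pi>2 s (Suc n)"
      proof (cases "s \<in> RR")
        case True
        then have hR: "hitp \<delta> RR ?m \<pi>2 s (Suc n) = 1" by (simp add: hitp_Suc)
        show ?thesis
        proof (cases "s \<in> T")
          case True then show ?thesis using hR v1[of s] by (simp add: hitp_Suc)
        next
          case False
          then have "v s = 0" using \<open>s \<in> RR\<close> vW by blast
          then show ?thesis using hR hitp_bounds(1)[of \<delta> T ?m \<pi>2 s "Suc n"] by simp
        qed
      next
        case False
        then have sT: "s \<notin> T" by blast
        define \<xi>2 where "\<xi>2 = (\<lambda>x. if x = s then \<pi>2 [s] else unif_selector G2 x)"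
        have \<xi>2: "\<xi>2 \<in> selectors G2"
          unfolding selectors_def
        proof (intro CollectI allI)
          fix x show "set_pmf (\<xi>2 x) \<subseteq> G2 x"
            using strat_supp[OF \<pi>2, of "[s]"] sel_supp[OF U2, of x] by (simp add: \<xi>2_def)
        qed
        have pv: "v s \<le> wsum (\<gamma>' s) (\<pi>2 [s]) (\<delta> s) v"
        proof -
          have "Pre_sel G1 G2 \<delta> \<gamma>' \<xi>2 v s = wsum (\<gamma>' s) (\<xi>2 s) (\<delta> s) v" by (rule PSW_sel[OF \<gamma>' \<xi>2])
          moreover have "\<xi>2 s = \<pi>2 [s]" by (simp add: \<xi>2_def)
          ultimately show ?thesis using pre[OF False \<xi>2] by simp
        qed
        have ih: "v t - (1 - hitp \<delta> RR ?m (hshift s \<pi>2) t n) \<le> hitp \<delta> T ?m (hshift s \<pi>2) t n" for t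
          using Suc.IH hshift_strat[OF \<pi>2] by blast
        have "v s - (1 - hitp \<delta> RR ?m \<pi>2 s (Suc n)) \<le>
           wsum (\<gamma>' s) (\<pi>2 [s]) (\<delta> s) (\<lambda>t. v t - (1 - hitp \<delta> RR ?m (hshift s \<pi>2) t n))"
          using pv False by (simp add: hitp_Suc cg mem_Cons1 wsum_sub1)
        also have "\<dots> \<le> wsum (\<gamma>' s) (\<pi>2 [s]) (\<delta> s) (\<lambda>t. hitp \<delta> T ?m (hshift s \<pi>2) t n)"
          by (rule wsum_mono) (rule ih)
        also have "\<dots> = hitp \<delta> T ?m \<pi>2 s (Suc n)"
          using sT by (simp add: hitp_Suc cg mem_Cons1)
        finally show ?thesis .
      qed
    qed
  qed
  have claim2: "\<forall>s \<pi>2. \<pi>2 \<in> strategies G2 \<longrightarrow> 1 - hitp \<delta> RR ?m \<pi>2 s n \<le> X \<gamma>' n s" for n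
  proof (induction n)
    case 0
    then show ?case by (simp add: X_0 hitp_bounds)
  next
    case (Suc n)
    show ?case
    proof (intro allI impI)
      fix s \<pi>2 assume \<pi>2: "\<pi>2 \<in> strategies G2"
      show "1 - hitp \<delta> RR ?m \<pi>2 s (Suc n) \<le> X \<gamma>' (Suc n) s"
      proof (cases "s \<in> RR")
        case True
        then show ?thesis using X_bounds[of \<gamma>' "Suc n" s] by (simp add: hitp_Suc)
      next
        case False
        have ih: "1 - hitp \<delta> RR ?m (hshift s \<pi>2) t n \<le> X \<gamma>' n t" for t
          using Suc.IH hshift_strat[OF \<pi>2] by blast
        have "1 - hitp \<delta> RR ?m \<pi>2 s (Suc n) = wsum (\<gamma>' s) (\<pi>2 [s]) (\<delta> s) (\<lambda>t. 1 - hitp \<delta> RR ?m (hshift s \<pi>2) t n)"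
          using False by (simp add: hitp_Suc cg mem_Cons1 wsum_1m)
        also have "\<dots> \<le> wsum (\<gamma>' s) (\<pi>2 [s]) (\<delta> s) (X \<gamma>' n)"
          by (rule wsum_mono) (rule ih)
        also have "\<dots> \<le> Max ((\<lambda>b. wsum (\<gamma>' s) (return_pmf b) (\<delta> s) (X \<gamma>' n)) ` G2 s)"
          by (rule wsum_le_Max) (use strat_supp[OF \<pi>2, of "[s]"] G2_ne in auto)
        also have "\<dots> = X \<gamma>' (Suc n) s" using False by (simp add: X_Suc Phi_def)
        finally show ?thesis .
      qed
    qed
  qed
  show ?thesis
    unfolding val1_strat_def
  proof (rule cINF_greatest[OF S2_ne])
    fix \<pi>2 assume \<pi>2: "\<pi>2 \<in> strategies G2"
    have le: "v s - X \<gamma>' n s \<le> reach_prob \<delta> T ?m \<pi>2 s" for n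
    proof -
      have "v s - (1 - hitp \<delta> RR ?m \<pi>2 s n) \<le> hitp \<delta> T ?m \<pi>2 s n" using claim1[of n] \<pi>2 by blast
      moreover have "1 - hitp \<delta> RR ?m \<pi>2 s n \<le> X \<gamma>' n s" using claim2[of n] \<pi>2 by blast
      ultimately show ?thesis using hitp_le_reach[of \<delta> T ?m \<pi>2 s n] by linarith
    qed
    have "(\<lambda>n. v s - X \<gamma>' n s) \<longlonglongrightarrow> v s - 0"
      by (intro tendsto_diff tendsto_const X_lim[OF p])
    then show "v s \<le> reach_prob \<delta> T ?m \<pi>2 s"
      using le by (simp add: LIMSEQ_le_const2)
  qed
qed

end

context game2 begin

lemma step_facts:
  assumes \<gamma>: "\<gamma> \<in> selectors G1" and p\<gamma>: "proper \<gamma>" and step: "improve_step G1 G2 \<delta> T \<gamma> \<gamma>'"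
  shows "\<gamma>' \<in> selectors G1 \<and> proper \<gamma>' \<and> (\<forall>s. vs \<gamma> s \<le> vs \<gamma>' s) \<and>
    (\<forall>s. Pre1 G1 G2 \<delta> (vs \<gamma>) s \<le> vs \<gamma>' s) \<and>
    (\<gamma>' \<noteq> \<gamma> \<longrightarrow> (\<exists>s. vs \<gamma> s < vs \<gamma>' s)) \<and>
    (\<gamma>' = \<gamma> \<longrightarrow> (\<forall>s. Pre1 G1 G2 \<delta> (vs \<gamma>) s \<le> vs \<gamma> s))"
proof -
  let ?v = "vs \<gamma>"
  define I where "I = {s. s \<notin> RR \<and> Pre1 G1 G2 \<delta> ?v s > ?v s}"
  obtain \<xi>1 where \<xi>1: "\<xi>1 \<in> selectors G1" and hI: "\<forall>s\<in>I. Pre1_sel G1 G2 \<delta> \<xi>1 ?v s = Pre1 G1 G2 \<delta> ?v s"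
    and g': "\<gamma>' = (\<lambda>s. if s \<in> I then \<xi>1 s else \<gamma> s)"
    using step unfolding improve_step_def Let_def I_def by blast
  have \<gamma>': "\<gamma>' \<in> selectors G1"
    unfolding selectors_def
  proof (intro CollectI allI)
    fix s show "set_pmf (\<gamma>' s) \<subseteq> G1 s" using sel_supp[OF \<xi>1, of s] sel_supp[OF \<gamma>, of s] by (simp add: g')
  qed
  have same: "\<And>s. s \<notin> I \<Longrightarrow> \<gamma>' s = \<gamma> s" by (simp add: g')
  have eqI: "Pre1_sel G1 G2 \<delta> \<gamma>' w s = Pre1_sel G1 G2 \<delta> \<xi>1 w s" if "s \<in> I" for s w
    using that by (simp add: g' Pre1_sel_def Pre_sel_def)
  have imp: "\<And>s. s \<in> I \<Longrightarrow> ?v s < Pre1_sel G1 G2 \<delta> \<gamma>' ?v s"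
    using hI eqI unfolding I_def by auto
  have p': "proper \<gamma>'" by (rule improve_proper[OF \<gamma> p\<gamma> \<gamma>' same imp])
  have v0: "\<And>t. 0 \<le> ?v t" and v1: "\<And>t. ?v t \<le> 1" by (simp_all add: vs_bounds)
  have mono: "?v s \<le> vs \<gamma>' s" for s
  proof (rule improve_ge[OF \<gamma>' p' v0 v1])
    show "\<And>t. t \<in> T \<Longrightarrow> ?v t = 1" by (rule val_T)
    show "\<And>t. t \<in> W2 G1 G2 \<delta> T \<Longrightarrow> ?v t = 0" using vs_W2 \<gamma> by blast
  next
    fix s \<xi>2 assume sR: "s \<notin> RR" and \<xi>2: "\<xi>2 \<in> selectors G2"
    show "?v s \<le> Pre_sel G1 G2 \<delta> \<gamma>' \<xi>2 ?v s"
    proof (cases "s \<in> I")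
      case True
      have "Pre1_sel G1 G2 \<delta> \<gamma>' ?v s \<le> Pre_sel G1 G2 \<delta> \<gamma>' \<xi>2 ?v s" by (rule Pre1_sel_le[OF v0 \<xi>2])
      then show ?thesis using imp[OF True] by simp
    next
      case False
      have "Pre_sel G1 G2 \<delta> \<gamma>' \<xi>2 ?v s = Pre_sel G1 G2 \<delta> \<gamma> \<xi>2 ?v s"
        by (rule Pre_sel_cong) (simp_all add: same[OF False])
      moreover have "?v s \<le> Pre_sel G1 G2 \<delta> \<gamma> \<xi>2 ?v s" by (rule bellman_le[OF \<gamma> _ \<xi>2]) (use sR in blast)
      ultimately show ?thesis by simp
    qed
  qed
  have strict: "Pre1 G1 G2 \<delta> ?v s \<le> vs \<gamma>' s" and strict2: "?v s < vs \<gamma>' s" if sI: "s \<in> I" for s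
  proof -
    have sT: "s \<notin> T" using sI unfolding I_def by blast
    have "Pre1 G1 G2 \<delta> ?v s = Pre1_sel G1 G2 \<delta> \<gamma>' ?v s" using hI eqI sI by simp
    also have "\<dots> \<le> Pre1_sel G1 G2 \<delta> \<gamma>' (vs \<gamma>') s" by (rule Pre1_sel_mono[OF \<gamma>' v0 mono])
    also have "\<dots> \<le> vs \<gamma>' s" by (rule bellman_ge[OF \<gamma>' sT])
    finally show "Pre1 G1 G2 \<delta> ?v s \<le> vs \<gamma>' s" .
    then show "?v s < vs \<gamma>' s" using sI unfolding I_def by simp
  qed
  have preall: "Pre1 G1 G2 \<delta> ?v s \<le> vs \<gamma>' s" for s
  proof (cases "s \<in> RR")
    case True
    then have "Pre1 G1 G2 \<delta> ?v s = ?v s" by (intro Pre1_absorbing absorb)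
    then show ?thesis using mono[of s] by simp
  next
    case False
    show ?thesis
    proof (cases "s \<in> I")
      case True then show ?thesis by (rule strict)
    next
      case False
      then have "Pre1 G1 G2 \<delta> ?v s \<le> ?v s" using \<open>s \<notin> RR\<close> unfolding I_def by auto
      then show ?thesis using mono[of s] by simp
    qed
  qed
  have ne: "\<gamma>' \<noteq> \<gamma> \<longrightarrow> (\<exists>s. ?v s < vs \<gamma>' s)"
  proof
    assume "\<gamma>' \<noteq> \<gamma>"
    then have "I \<noteq> {}" using g' by auto
    then obtain s where "s \<in> I" by blast
    then show "\<exists>s. ?v s < vs \<gamma>' s" using strict2 by blast
  qed
  have eq: "\<gamma>' = \<gamma> \<longrightarrow> (\<forall>s. Pre1 G1 G2 \<delta> ?v s \<le> ?v s)"
  proof (intro impI allI)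
    fix s assume e: "\<gamma>' = \<gamma>"
    have "I = {}"
    proof (rule ccontr)
      assume "I \<noteq> {}"
      then obtain u where "u \<in> I" by blast
      then show False using strict2[of u] e by simp
    qed
    show "Pre1 G1 G2 \<delta> ?v s \<le> ?v s"
    proof (cases "s \<in> RR")
      case True then show ?thesis by (simp add: Pre1_absorbing absorb)
    next
      case False then show ?thesis using \<open>I = {}\<close> unfolding I_def by auto
    qed
  qed
  show ?thesis using \<gamma>' p' mono preall ne eq by blast
qed

lemma run_inv:
  assumes run: "algo_run G1 G2 \<delta> T \<gamma>"
  shows "\<gamma> i \<in> selectors G1 \<and> proper (\<gamma> i)"
proof (induction i)
  case 0 then show ?case using run U1 uniform_proper unfolding algo_run_def by simp
next
  case (Suc i)
  have "improve_step G1 G2 \<delta> T (\<gamma> i) (\<gamma> (Suc i))" using run unfolding algo_run_def by blast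
  then show ?case using step_facts Suc by blast
qed

lemma mem_eq: "memoryless \<gamma> = memoryless \<gamma>' \<longleftrightarrow> \<gamma> = \<gamma>'"
proof
  assume "memoryless \<gamma> = memoryless \<gamma>'"
  then have "\<And>x. memoryless \<gamma> [x] = memoryless \<gamma>' [x]" by simp
  then show "\<gamma> = \<gamma>'" by (auto simp: mem_Cons1)
qed simp

lemma main:
  assumes run: "algo_run G1 G2 \<delta> T \<gamma>"
  shows "(\<forall>i. strat_le G2 \<delta> T (memoryless (\<gamma> i)) (memoryless (\<gamma> (Suc i))) \<and>
              (memoryless (\<gamma> i) = memoryless (\<gamma> (Suc i)) \<longrightarrow>
                 val1_strat G2 \<delta> T (memoryless (\<gamma> i)) = val1 G1 G2 \<delta> T)) \<and>
         (\<forall>s. (\<lambda>i. val1_strat G2 \<delta> T (memoryless (\<gamma> i)) s) \<longlonglongrightarrow> val1 G1 G2 \<delta> T s)"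
proof -
  have F: "\<gamma> (Suc i) \<in> selectors G1 \<and> proper (\<gamma> (Suc i)) \<and> (\<forall>s. vs (\<gamma> i) s \<le> vs (\<gamma> (Suc i)) s) \<and>
    (\<forall>s. Pre1 G1 G2 \<delta> (vs (\<gamma> i)) s \<le> vs (\<gamma> (Suc i)) s) \<and>
    (\<gamma> (Suc i) \<noteq> \<gamma> i \<longrightarrow> (\<exists>s. vs (\<gamma> i) s < vs (\<gamma> (Suc i)) s)) \<and>
    (\<gamma> (Suc i) = \<gamma> i \<longrightarrow> (\<forall>s. Pre1 G1 G2 \<delta> (vs (\<gamma> i)) s \<le> vs (\<gamma> i) s))" for i
  proof (rule step_facts)
    show "\<gamma> i \<in> selectors G1" "proper (\<gamma> i)" using run_inv[OF run] by auto
    show "improve_step G1 G2 \<delta> T (\<gamma> i) (\<gamma> (Suc i))" using run unfolding algo_run_def by blast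
  qed
  have sel: "\<gamma> i \<in> selectors G1" for i using run_inv[OF run] by auto
  have le_val1: "vs (\<gamma> i) s \<le> val1 G1 G2 \<delta> T s" for i s
    by (rule val1_ge[OF memoryless_strat[OF sel]])
  have part1: "strat_le G2 \<delta> T (memoryless (\<gamma> i)) (memoryless (\<gamma> (Suc i))) \<and>
              (memoryless (\<gamma> i) = memoryless (\<gamma> (Suc i)) \<longrightarrow>
                 val1_strat G2 \<delta> T (memoryless (\<gamma> i)) = val1 G1 G2 \<delta> T)" for i
  proof
    show "strat_le G2 \<delta> T (memoryless (\<gamma> i)) (memoryless (\<gamma> (Suc i)))"
    proof (cases "\<gamma> (Suc i) = \<gamma> i")
      case True then show ?thesis unfolding strat_le_def by simp
    next
      case False
      then show ?thesis using F[of i] unfolding strat_le_def strat_less_def by blast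
    qed
    show "memoryless (\<gamma> i) = memoryless (\<gamma> (Suc i)) \<longrightarrow> vs (\<gamma> i) = val1 G1 G2 \<delta> T"
    proof
      assume "memoryless (\<gamma> i) = memoryless (\<gamma> (Suc i))"
      then have "\<gamma> (Suc i) = \<gamma> i" by (simp add: mem_eq)
      then have pre: "\<And>s. Pre1 G1 G2 \<delta> (vs (\<gamma> i)) s \<le> vs (\<gamma> i) s" using F[of i] by blast
      show "vs (\<gamma> i) = val1 G1 G2 \<delta> T"
      proof
        fix s
        have "val1 G1 G2 \<delta> T s \<le> vs (\<gamma> i) s"
          by (rule upper_bound) (simp_all add: vs_bounds pre val_T)
        then show "vs (\<gamma> i) s = val1 G1 G2 \<delta> T s" using le_val1[of i s] by simp
      qed
    qed
  qed
  have part2: "(\<lambda>i. vs (\<gamma> i) s) \<longlonglongrightarrow> val1 G1 G2 \<delta> T s" for s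
  proof -
    define L where "L = (\<lambda>s. SUP i. vs (\<gamma> i) s)"
    have bdd: "bdd_above (range (\<lambda>i. vs (\<gamma> i) s))" for s
      by (rule bdd_aboveI[of _ 1]) (auto simp: vs_bounds)
    have inc: "incseq (\<lambda>i. vs (\<gamma> i) s)" for s
      by (rule incseq_SucI) (use F in blast)
    have lim: "(\<lambda>i. vs (\<gamma> i) s) \<longlonglongrightarrow> L s" for s
      unfolding L_def by (rule LIMSEQ_incseq_SUP[OF bdd inc])
    have vL: "vs (\<gamma> i) s \<le> L s" for i s unfolding L_def by (rule cSUP_upper[OF _ bdd]) simp
    have Lval: "L s \<le> val1 G1 G2 \<delta> T s" for s unfolding L_def by (rule cSUP_least) (auto intro: le_val1)
    have L0: "0 \<le> L t" for t using vL[of 0 t] vs_bounds(1)[of "\<gamma> 0" t] by simp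
    have L1: "L t \<le> 1" for t using Lval[of t] val1_le1[of t] by simp
    have LT: "t \<in> T \<Longrightarrow> L t = 1" for t using vL[of 0 t] L1[of t] val_T[of t] by fastforce
    have preL: "Pre1 G1 G2 \<delta> L u \<le> L u" for u
    proof -
      define c where "c = (\<lambda>i. \<Sum>t\<in>UNIV. L t - vs (\<gamma> i) t)"
      have cnn: "\<And>i t. 0 \<le> L t - vs (\<gamma> i) t" using vL by simp
      have c0: "(\<lambda>i. c i) \<longlonglongrightarrow> 0"
      proof -
        have "(\<lambda>i. \<Sum>t\<in>UNIV. L t - vs (\<gamma> i) t) \<longlonglongrightarrow> (\<Sum>t\<in>(UNIV::'s set). L t - L t)"
          by (intro tendsto_sum tendsto_diff tendsto_const lim)
        then show ?thesis unfolding c_def by simp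
      qed
      have Lc: "L t \<le> vs (\<gamma> i) t + c i" for i t
      proof -
        have "L t - vs (\<gamma> i) t \<le> c i" unfolding c_def by (rule member_le_sum) (use cnn in auto)
        then show ?thesis by simp
      qed
      have c_nn: "0 \<le> c i" for i unfolding c_def by (rule sum_nonneg) (use cnn in auto)
      have bound: "Pre1 G1 G2 \<delta> L u - L u \<le> c i" for i
      proof -
        have "Pre1 G1 G2 \<delta> L u \<le> Pre1 G1 G2 \<delta> (\<lambda>t. vs (\<gamma> i) t + c i) u"
          by (rule Pre1_mono[where B="1 + c i"]) (use L0 Lc vs_bounds in auto)
        also have "\<dots> \<le> Pre1 G1 G2 \<delta> (vs (\<gamma> i)) u + c i"
          by (rule Pre1_add[where B=1]) (simp_all add: vs_bounds c_nn)
        also have "\<dots> \<le> vs (\<gamma> (Suc i)) u + c i" using F[of i] by simp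
        also have "\<dots> \<le> L u + c i" using vL by simp
        finally show ?thesis by simp
      qed
      have "Pre1 G1 G2 \<delta> L u - L u \<le> 0"
        by (rule LIMSEQ_le_const[OF c0]) (use bound in auto)
      then show ?thesis by simp
    qed
    have "val1 G1 G2 \<delta> T s \<le> L s" by (rule upper_bound[OF L0 L1 preL LT])
    then have "L s = val1 G1 G2 \<delta> T s" using Lval[of s] by simp
    then show ?thesis using lim[of s] by simp
  qed
  show ?thesis using part1 part2 by blast
qed

end

theorem theorem3:
  fixes G1 G2 :: "'s::finite \<Rightarrow> 'm::finite set"
    and \<delta> :: "'s \<Rightarrow> 'm \<Rightarrow> 'm \<Rightarrow> 's pmf"
    and T :: "'s set"
    and \<gamma> :: "nat \<Rightarrow> ('s,'m) selector"
  assumes G1_ne: "\<And>s. G1 s \<noteq> {}"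
    and G2_ne: "\<And>s. G2 s \<noteq> {}"
    and absorb: "\<And>s. s \<in> T \<union> W2 G1 G2 \<delta> T \<Longrightarrow> absorbing G1 G2 \<delta> s"
    and run: "algo_run G1 G2 \<delta> T \<gamma>"
  shows "(\<forall>i. strat_le G2 \<delta> T (memoryless (\<gamma> i)) (memoryless (\<gamma> (Suc i))) \<and>
              (memoryless (\<gamma> i) = memoryless (\<gamma> (Suc i)) \<longrightarrow>
                 val1_strat G2 \<delta> T (memoryless (\<gamma> i)) = val1 G1 G2 \<delta> T)) \<and>
         (\<forall>s. (\<lambda>i. val1_strat G2 \<delta> T (memoryless (\<gamma> i)) s) \<longlonglongrightarrow> val1 G1 G2 \<delta> T s)"
proof -
  interpret game2 G1 G2 \<delta> T
    by unfold_locales (use G1_ne G2_ne absorb in auto)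
  show ?thesis by (rule main[OF run])
qed

end
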